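(* Let $d\ge 2$ and let $X$ be a finite uniform $d$-complex, with upper Laplacian $\Delta^+$ acting on $\Omega^{d-1}(X)$. Then: (1) $\operatorname{Spec}\Delta^+(X)$ is the union, counted with multiplicities, of the spectra $\operatorname{Spec}\Delta^+(X_C)$, where $C$ runs over the $(d-1)$-components of $X$. (2) $\operatorname{Spec}\Delta^+(X)\subseteq[0,d+1]$. (3) $\ker\Delta^+=Z^{d-1}$, i.e. the eigenvalue $0$ is attained exactly on the closed $(d-1)$-forms. (4) If $X$ is $(d-1)$-connected, then $d+1\in\operatorname{Spec}\Delta^+(X)$ if and only if $X$ is disorientable. Moreover, if $X^d_+$ is a disorientation and $F\in\Omega^d(X)$ is defined by $F(\tau)=1$ for $\tau\in X^d_+$ and $F(\tau)=-1$ for $\tau\in X^d_\pm\setminus X^d_+$, then $\Delta^+(\partial_dF)=(d+1)\,\partial_dF$ and $\partial_d F\neq 0$.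
   Context: A simplicial complex $X$ on a vertex set $V$ is a collection of finite subsets of $V$ (cells), closed under taking subsets (the empty set is a cell). A cell with $j+1$ elements is a $j$-cell; $X^j$ is the set of $j$-cells. $X$ is a $d$-complex if the maximal dimension of a cell is $d$; it is uniform if every cell lies in some $d$-cell. The degree $\deg\sigma$ of a $j$-cell $\sigma$ is the number of $(j+1)$-cells containing it. For $j\ge1$ each $j$-cell has two orientations (orderings of its vertices modulo even permutations), written $[v_0,\dots,v_j]$; $X^j_\pm$ is the set of oriented $j$-cells and $\bar\sigma$ denotes the opposite orientation. The oriented cell $[v_0,\dots,v_j]$ induces on its face $\{v_0,\dots,v_j\}\setminus\{v_i\}$ the orientation $(-1)^i[v_0,\dots,\widehat{v_i},\dots,v_j]$, where a factor $-1$ means reversing the orientation. For $v\notin\sigma$ write $v\triangleleft\sigma$ if $\sigma\cup\{v\}\in X$, and for oriented $\sigma=[\sigma_0,\dots,\sigma_k]$ let $v\sigma=[v,\sigma_0,\dots,\sigma_k]$. The space $\Omega^j=\Omega^j(X)$ of $j$-forms consists of the real functions $f$ on $X^j_\pm$ with $f(\bar\sigma)=-f(\sigma)$ (for $j=0$: all functions on $X^0$; for $j=-1$: functions on $\{\emptyset\}$). Two oriented $(d-1)$-cells are neighbours, $\sigma\sim\sigma'$, if some oriented $d$-cell $\tau$ has both $\sigma$ and $\overline{\sigma'}$ as faces with the orientations induced by $\tau$ (each $\sigma$ has $d\deg\sigma$ neighbours). Inner products: on $\Omega^{d-1}$, $\langle f,g\rangle=\sum_{\sigma\in X^{d-1}}f(\sigma)g(\sigma)/\deg\sigma$;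 on $\Omega^k$, $k\ne d-1$, $\langle f,g\rangle=\sum_{\sigma\in X^k}f(\sigma)g(\sigma)$ (summands do not depend on the orientation chosen). Boundary maps $\partial_k:\Omega^k\to\Omega^{k-1}$: $(\partial_kf)(\sigma)=\sum_{v\triangleleft\sigma}f(v\sigma)$. Coboundary maps $\delta_k:\Omega^{k-1}\to\Omega^k$: for $\sigma=[\sigma_0,\dots,\sigma_k]$, writing $\sigma\setminus\sigma_i$ for $[\sigma_0,\dots,\widehat{\sigma_i},\dots,\sigma_k]$, $(\delta_kf)(\sigma)=\sum_{i=0}^k(-1)^if(\sigma\setminus\sigma_i)$ if $k\le d-2$, $(\delta_{d-1}f)(\sigma)=\deg\sigma\sum_{i=0}^{d-1}(-1)^if(\sigma\setminus\sigma_i)$, and $(\delta_df)(\sigma)=\sum_{i=0}^d(-1)^if(\sigma\setminus\sigma_i)/\deg(\sigma\setminus\sigma_i)$ (for finite $X$, $\delta_k$ is the adjoint of $\partial_k$). The upper Laplacian $\Delta^+=\partial_d\delta_d$ on $\Omega^{d-1}$ is given by $(\Delta^+f)(\sigma)=f(\sigma)-\sum_{\sigma'\sim\sigma}f(\sigma')/\deg\sigma'$. Closed forms: $Z^{d-1}=\ker\delta_d$. $X$ is $(d-1)$-connected if for all $\sigma,\sigma'\in X^{d-1}_\pm$ there is a chain $\sigma=\sigma_0\sim\sigma_1\sim\dots\sim\sigma_n=\sigma'$. The $(d-1)$-components of $X$ are the classes of the equivalence relation on $X^{d-1}$ generated by $\sigma\approx\sigma'$ whenever $\sigma\cup\sigma'\in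 X^d$; to a class $C$ one associates the subcomplex $X_C$ consisting of all $d$-cells containing a cell of $C$ together with all their subsets, and the component is called disorientable if $X_C$ is. A disorientation of a $d$-complex is a choice $X^d_+\subseteq X^d_\pm$ of exactly one orientation for each $d$-cell such that whenever two cells of $X^d_+$ intersect in a $(d-1)$-cell they induce the same orientation on it; the complex is disorientable if it has a disorientation. *)

theory Defs
  imports Complex_Main "HOL-Library.Function_Algebras" "HOL-Combinatorics.Permutations"
begin

definition simplicial_complex :: "'a set set \<Rightarrow> bool" where
  "simplicial_complex X \<longleftrightarrow> {} \<in> X \<and> (\<forall>\<sigma>\<in>X. finite \<sigma>) \<and> (\<forall>\<sigma>\<in>X. \<forall>\<tau>. \<tau> \<subseteq> \<sigma> \<longrightarrow> \<tau> \<in> X)"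

definition cells :: "'a set set \<Rightarrow> nat \<Rightarrow> 'a set set" where
  "cells X j = {\<sigma>\<in>X. card \<sigma> = j + 1}"

definition is_dcomplex :: "'a set set \<Rightarrow> nat \<Rightarrow> bool" where
  "is_dcomplex X d \<longleftrightarrow> simplicial_complex X \<and> cells X d \<noteq> {} \<and> (\<forall>\<sigma>\<in>X. card \<sigma> \<le> d + 1)"

definition uniform :: "'a set set \<Rightarrow> nat \<Rightarrow> bool" where
  "uniform X d \<longleftrightarrow> (\<forall>\<sigma>\<in>X. \<exists>\<tau>\<in>cells X d. \<sigma> \<subseteq> \<tau>)"

definition deg :: "'a set set \<Rightarrow> 'a set \<Rightarrow> nat" where
  "deg X \<sigma> = card {\<tau>\<in>X. \<sigma> \<subseteq> \<tau> \<and> card \<tau> = card \<sigma> + 1}"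

text \<open>Oriented j-cells are represented by vertex lists (orderings);
  two lists represent the same orientation iff they differ by an even permutation.\<close>
definition ocells :: "'a set set \<Rightarrow> nat \<Rightarrow> 'a list set" where
  "ocells X j = {xs. distinct xs \<and> set xs \<in> X \<and> length xs = j + 1}"

definition swap_at :: "'a list \<Rightarrow> nat \<Rightarrow> nat \<Rightarrow> 'a list" where
  "swap_at xs i k = xs[i := xs ! k, k := xs ! i]"

definition orient_eq :: "'a list \<Rightarrow> 'a list \<Rightarrow> bool" where
  "orient_eq xs ys \<longleftrightarrow> length ys = length xs \<and>
     (\<exists>p. p permutes {..<length xs} \<and> evenperm p \<and> ys = map (\<lambda>i. xs ! p i) [0..<length xs])"

definition opp :: "'a list \<Rightarrow> 'a list" where
  "opp xs = swap_at xs 0 1"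

text \<open>j-forms (j \<ge> 1): real functions on oriented j-cells, antisymmetric
  (f(opposite) = - f); represented as functions on lists vanishing off the oriented j-cells.\<close>
definition forms :: "'a set set \<Rightarrow> nat \<Rightarrow> ('a list \<Rightarrow> real) set" where
  "forms X j = {f. (\<forall>xs. xs \<notin> ocells X j \<longrightarrow> f xs = 0) \<and>
      (\<forall>xs\<in>ocells X j. \<forall>i<length xs. \<forall>k<length xs. i \<noteq> k \<longrightarrow> f (swap_at xs i k) = - f xs)}"

definition del_at :: "nat \<Rightarrow> 'a list \<Rightarrow> 'a list" where
  "del_at i xs = take i xs @ drop (Suc i) xs"

definition up_verts :: "'a set set \<Rightarrow> 'a list \<Rightarrow> 'a set" where
  "up_verts X \<sigma> = {v. v \<notin> set \<sigma> \<and> insert v (set \<sigma>) \<in> X}"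

definition bd :: "'a set set \<Rightarrow> nat \<Rightarrow> ('a list \<Rightarrow> real) \<Rightarrow> ('a list \<Rightarrow> real)" where
  "bd X k f = (\<lambda>\<sigma>. if \<sigma> \<in> ocells X (k - 1) then (\<Sum>v\<in>up_verts X \<sigma>. f (v # \<sigma>)) else 0)"

definition cobd_top :: "'a set set \<Rightarrow> nat \<Rightarrow> ('a list \<Rightarrow> real) \<Rightarrow> ('a list \<Rightarrow> real)" where
  "cobd_top X d f = (\<lambda>\<tau>. if \<tau> \<in> ocells X d then
      (\<Sum>i<d + 1. (-1) ^ i * f (del_at i \<tau>) / real (deg X (set (del_at i \<tau>)))) else 0)"

definition uplap :: "'a set set \<Rightarrow> nat \<Rightarrow> ('a list \<Rightarrow> real) \<Rightarrow> ('a list \<Rightarrow> real)" where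
  "uplap X d f = bd X d (cobd_top X d f)"

definition eigenspace_up :: "'a set set \<Rightarrow> nat \<Rightarrow> real \<Rightarrow> ('a list \<Rightarrow> real) set" where
  "eigenspace_up X d lam = {f\<in>forms X (d - 1). uplap X d f = (\<lambda>x. lam * f x)}"

definition eigenvalue_up :: "'a set set \<Rightarrow> nat \<Rightarrow> real \<Rightarrow> bool" where
  "eigenvalue_up X d lam \<longleftrightarrow> (\<exists>f\<in>eigenspace_up X d lam. f \<noteq> (\<lambda>_. 0))"

text \<open>multiplicity of lam in Spec \<Delta>^+ (dimension of the eigenspace; \<Delta>^+ is self-adjoint)\<close>
definition mult_up :: "'a set set \<Rightarrow> nat \<Rightarrow> real \<Rightarrow> nat" where
  "mult_up X d lam = vector_space.dim (\<lambda>(c::real) (f::'a list \<Rightarrow> real). (\<lambda>x. c * f x))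
      (eigenspace_up X d lam)"

definition adj :: "'a set set \<Rightarrow> nat \<Rightarrow> ('a set \<times> 'a set) set" where
  "adj X d = {(\<sigma>, \<sigma>'). \<sigma> \<in> cells X (d - 1) \<and> \<sigma>' \<in> cells X (d - 1) \<and> \<sigma> \<union> \<sigma>' \<in> cells X d}"

definition components :: "'a set set \<Rightarrow> nat \<Rightarrow> 'a set set set" where
  "components X d = cells X (d - 1) // ((adj X d)\<^sup>*)"

definition comp_complex :: "'a set set \<Rightarrow> nat \<Rightarrow> 'a set set \<Rightarrow> 'a set set" where
  "comp_complex X d C = {\<rho>. \<exists>\<tau>\<in>cells X d. (\<exists>c\<in>C. c \<subseteq> \<tau>) \<and> \<rho> \<subseteq> \<tau>}"

definition induces :: "'a list \<Rightarrow> 'a list \<Rightarrow> bool" where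
  "induces \<tau> \<sigma> \<longleftrightarrow> (\<exists>i<length \<tau>. orient_eq (del_at i \<tau>) (if even i then \<sigma> else opp \<sigma>))"

definition nbr :: "'a set set \<Rightarrow> nat \<Rightarrow> 'a list \<Rightarrow> 'a list \<Rightarrow> bool" where
  "nbr X d \<sigma> \<sigma>' \<longleftrightarrow> (\<exists>\<tau>\<in>ocells X d. induces \<tau> \<sigma> \<and> induces \<tau> (opp \<sigma>'))"

definition dconnected :: "'a set set \<Rightarrow> nat \<Rightarrow> bool" where
  "dconnected X d \<longleftrightarrow> (\<forall>\<sigma>\<in>ocells X (d - 1). \<forall>\<sigma>'\<in>ocells X (d - 1). (nbr X d)\<^sup>*\<^sup>* \<sigma> \<sigma>')"

text \<open>A disorientation X^d_+ is represented as the set of all lists representing the chosen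
  orientations: closed under even permutations, containing exactly one of t, opp t for each
  oriented d-cell t, and inducing the same orientation on common (d-1)-faces.\<close>
definition disorientation :: "'a set set \<Rightarrow> nat \<Rightarrow> 'a list set \<Rightarrow> bool" where
  "disorientation X d S \<longleftrightarrow> S \<subseteq> ocells X d \<and>
     (\<forall>t\<in>ocells X d. \<forall>t'. orient_eq t t' \<longrightarrow> (t \<in> S \<longleftrightarrow> t' \<in> S)) \<and>
     (\<forall>t\<in>ocells X d. t \<in> S \<longleftrightarrow> opp t \<notin> S) \<and>
     (\<forall>t\<in>S. \<forall>t'\<in>S. set t \<noteq> set t' \<and> card (set t \<inter> set t') = d \<longrightarrow>
        (\<exists>\<sigma>. induces t \<sigma> \<and> induces t' \<sigma>))"

definition disorientable :: "'a set set \<Rightarrow> nat \<Rightarrow> bool" where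
  "disorientable X d \<longleftrightarrow> (\<exists>S. disorientation X d S)"

definition disF :: "'a set set \<Rightarrow> nat \<Rightarrow> 'a list set \<Rightarrow> 'a list \<Rightarrow> real" where
  "disF X d S = (\<lambda>xs. if xs \<in> S then 1 else if xs \<in> ocells X d then -1 else 0)"

end

theory Submission
  imports Defs
begin

definition rot :: "nat \<Rightarrow> 'a list \<Rightarrow> 'a list" where
  "rot i xs = xs ! i # del_at i xs"

lemma del_at_len[simp]: "i < length xs \<Longrightarrow> length (del_at i xs) = length xs - 1"
  by (simp add: del_at_def)

lemma del_at_nth: "i < length xs \<Longrightarrow> m < length xs - 1 \<Longrightarrow>
    del_at i xs ! m = xs ! (if m < i then m else Suc m)"
  by (auto simp: del_at_def nth_append min_def)

lemma del_at_0[simp]: "del_at 0 xs = tl xs"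
  by (simp add: del_at_def drop_Suc)

lemma del_at_distinct: "distinct xs \<Longrightarrow> distinct (del_at i xs)"
  unfolding del_at_def
  by (simp add: set_take_disj_set_drop_if_distinct)

lemma del_at_set: "distinct xs \<Longrightarrow> i < length xs \<Longrightarrow> set (del_at i xs) = set xs - {xs ! i}"
proof -
  assume d: "distinct xs" and i: "i < length xs"
  have xs: "xs = take i xs @ xs ! i # drop (Suc i) xs" using i by (simp add: id_take_nth_drop)
  have "set xs = set (take i xs) \<union> {xs!i} \<union> set (drop (Suc i) xs)" by (subst xs) auto
  moreover have "distinct (take i xs @ xs ! i # drop (Suc i) xs)" using d xs by simp
  hence "xs ! i \<notin> set (take i xs) \<union> set (drop (Suc i) xs)" by auto
  ultimately show ?thesis unfolding del_at_def by auto
qed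

lemma del_at_subset: "set (del_at i xs) \<subseteq> set xs"
  unfolding del_at_def by (metis set_append set_drop_subset set_take_subset Un_least)

lemma swap_at_len[simp]: "length (swap_at xs i k) = length xs"
  by (simp add: swap_at_def)

lemma swap_at_set[simp]: "i < length xs \<Longrightarrow> k < length xs \<Longrightarrow> set (swap_at xs i k) = set xs"
  by (simp add: swap_at_def)

lemma swap_at_distinct[simp]: "i < length xs \<Longrightarrow> k < length xs \<Longrightarrow> distinct (swap_at xs i k) = distinct xs"
  by (simp add: swap_at_def)

lemma swap_at_nth: "i < length xs \<Longrightarrow> k < length xs \<Longrightarrow> m < length xs \<Longrightarrow>
   swap_at xs i k ! m = xs ! (if m = i then k else if m = k then i else m)"
  by (auto simp: swap_at_def nth_list_update)

lemma swap_ocells: "xs \<in> ocells X j \<Longrightarrow> i < length xs \<Longrightarrow> k < length xs \<Longrightarrow> swap_at xs i k \<in> ocells X j"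
  by (simp add: ocells_def)

lemma rot_Suc: "Suc i < length xs \<Longrightarrow> rot (Suc i) xs = rot i (swap_at xs i (Suc i))"
  unfolding rot_def
  by (auto intro!: nth_equalityI simp: del_at_nth swap_at_nth)

lemma rot_0: "xs \<noteq> [] \<Longrightarrow> rot 0 xs = xs"
  by (simp add: rot_def hd_conv_nth[symmetric])

lemma forms_swap: "g \<in> forms X k \<Longrightarrow> xs \<in> ocells X k \<Longrightarrow> i < length xs \<Longrightarrow> k' < length xs \<Longrightarrow> i \<noteq> k'
   \<Longrightarrow> g (swap_at xs i k') = - g xs"
  by (simp add: forms_def)

lemma forms_zero: "g \<in> forms X k \<Longrightarrow> xs \<notin> ocells X k \<Longrightarrow> g xs = 0"
  by (simp add: forms_def)

lemma forms_rot: "g \<in> forms X k \<Longrightarrow> xs \<in> ocells X k \<Longrightarrow> i < length xs \<Longrightarrow> g (rot i xs) = (-1)^i * g xs"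
proof (induction i arbitrary: xs)
  case 0 then show ?case by (auto simp: rot_0)
next
  case (Suc i)
  have "g (rot (Suc i) xs) = g (rot i (swap_at xs i (Suc i)))" using Suc by (simp add: rot_Suc)
  also have "\<dots> = (-1)^i * g (swap_at xs i (Suc i))"
    using Suc by (intro Suc.IH swap_ocells) auto
  also have "\<dots> = (-1)^Suc i * g xs" using Suc forms_swap[OF Suc.prems(1,2), of i "Suc i"] by simp
  finally show ?case .
qed

lemma permute_list_transpose: "a < length ys \<Longrightarrow> b < length ys \<Longrightarrow>
   permute_list (Transposition.transpose a b) ys = swap_at ys a b"
  by (auto intro!: nth_equalityI simp: permute_list_def swap_at_nth transpose_def)

lemma ocells_len: "xs \<in> ocells X k \<Longrightarrow> length xs = Suc k"
  by (simp add: ocells_def)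

lemma forms_perm: assumes g: "g \<in> forms X k" and xs: "xs \<in> ocells X k"
  and p: "p permutes {..<length xs}"
  shows "permute_list p xs \<in> ocells X k \<and> g (permute_list p xs) = real_of_int (sign p) * g xs"
  using finite_lessThan p
proof (induction p rule: permutes_rev_induct)
  case id then show ?case using xs by (simp add: sign_def)
next
  case (swap a b p)
  have pt: "permute_list (p \<circ> Transposition.transpose a b) xs = swap_at (permute_list p xs) a b"
    using swap by (simp add: permute_list_compose permutes_swap_id permute_list_transpose)
  have sg: "sign (p \<circ> Transposition.transpose a b) = - sign p"
    using swap by (simp add: sign_compose permutes_imp_permutation[OF finite_lessThan] sign_swap_id
      permutation_swap_id)
  show ?case unfolding pt sg using swap forms_swap[OF g, of "permute_list p xs" a b]
    by (simp add: swap_ocells)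
qed

lemma orient_eqD: "orient_eq xs ys \<Longrightarrow> \<exists>p. p permutes {..<length xs} \<and> evenperm p \<and> ys = permute_list p xs"
  by (auto simp: orient_eq_def permute_list_def)

lemma forms_orient: assumes "g \<in> forms X k" "xs \<in> ocells X k" "orient_eq xs ys"
  shows "ys \<in> ocells X k \<and> g ys = g xs"
  using orient_eqD[OF assms(3)] forms_perm[OF assms(1,2)] by (auto simp: sign_def)

lemma orient_eq_set: "orient_eq xs ys \<Longrightarrow> set ys = set xs"
  using orient_eqD by (metis set_permute_list)

lemma orient_eq_refl: "orient_eq xs xs"
  unfolding orient_eq_def by (auto intro!: exI[of _ id] simp: map_nth)

lemma swap_at_sym: "swap_at xs i k = swap_at xs k i"
  by (cases "i = k") (auto simp: swap_at_def list_update_swap)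

lemma swap_reduce: "i < k \<Longrightarrow> Suc k < length xs \<Longrightarrow>
   swap_at xs i (Suc k) = swap_at (swap_at (swap_at xs k (Suc k)) i k) k (Suc k)"
  by (auto intro!: nth_equalityI simp: swap_at_nth)

lemma adj_swap_forms:
  fixes g :: "'a list \<Rightarrow> real"
  assumes H: "\<And>xs i. xs \<in> ocells X k \<Longrightarrow> Suc i < length xs \<Longrightarrow> g (swap_at xs i (Suc i)) = - g xs"
  and xs: "xs \<in> ocells X k" and ik: "i < k'" and k': "k' < length xs"
  shows "g (swap_at xs i k') = - g xs"
  using k' xs ik
proof (induction k' arbitrary: xs)
  case 0 then show ?case by simp
next
  case (Suc m xs)
  show ?case
  proof (cases "i = m")
    case True then show ?thesis using Suc H by simp
  next
    case False
    hence ik: "i < m" using Suc by simp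
    define A where "A = swap_at xs m (Suc m)"
    define B where "B = swap_at A i m"
    have A: "A \<in> ocells X k" "g A = - g xs" using Suc H swap_ocells[of xs X k m "Suc m"] unfolding A_def by auto
    have B: "B \<in> ocells X k" "g B = - g A" unfolding B_def using Suc.IH[of A] A ik Suc.prems
      by (auto intro: swap_ocells simp: A_def)
    have "g (swap_at xs i (Suc m)) = g (swap_at B m (Suc m))"
      using swap_reduce[OF ik Suc.prems(1)] by (simp add: A_def B_def)
    also have "\<dots> = - g B" using H[OF B(1)] Suc.prems by (simp add: B_def A_def)
    finally show ?thesis using A B by simp
  qed
qed

lemma adj_swap_forms':
  assumes H: "\<And>xs i. xs \<in> ocells X k \<Longrightarrow> Suc i < length xs \<Longrightarrow> g (swap_at xs i (Suc i)) = - g xs"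
  and Z: "\<And>xs. xs \<notin> ocells X k \<Longrightarrow> g xs = 0"
  shows "g \<in> forms X k"
  unfolding forms_def
proof (safe)
  fix xs i k' assume "xs \<in> ocells X k" "i < length xs" "k' < length xs" "i \<noteq> k'"
  then show "g (swap_at xs i k') = - g xs"
    using adj_swap_forms[OF H] swap_at_sym by (metis linorder_neq_iff)
qed (use Z in auto)

lemma del_swap_lt: "j < i \<Longrightarrow> Suc i < length t \<Longrightarrow>
   del_at j (swap_at t i (Suc i)) = swap_at (del_at j t) (i - 1) i"
  by (auto intro!: nth_equalityI simp: swap_at_nth del_at_nth)

lemma del_swap_gt: "Suc i < j \<Longrightarrow> j < length t \<Longrightarrow>
   del_at j (swap_at t i (Suc i)) = swap_at (del_at j t) i (Suc i)"
  by (auto intro!: nth_equalityI simp: swap_at_nth del_at_nth)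

lemma del_swap_i: "Suc i < length t \<Longrightarrow> del_at i (swap_at t i (Suc i)) = del_at (Suc i) t"
  by (auto intro!: nth_equalityI simp: swap_at_nth del_at_nth less_Suc_eq)

lemma del_swap_Si: "Suc i < length t \<Longrightarrow> del_at (Suc i) (swap_at t i (Suc i)) = del_at i t"
  by (auto intro!: nth_equalityI simp: swap_at_nth del_at_nth less_Suc_eq)

lemma rot_inj: "i < length x \<Longrightarrow> length y = length x \<Longrightarrow> rot i x = rot i y \<Longrightarrow> x = y"
proof (rule nth_equalityI)
  assume a: "i < length x" "length y = length x" "rot i x = rot i y"
  then show "length x = length y" by simp
  have h: "x ! i = y ! i" "del_at i x = del_at i y" using a by (auto simp: rot_def)
  fix m assume m: "m < length x"
  show "x ! m = y ! m"
  proof (cases "m = i")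
    case True then show ?thesis using h by simp
  next
    case False
    show ?thesis
    proof (cases "m < i")
      case True
      then show ?thesis using del_at_nth[of i x m] del_at_nth[of i y m] a h m by auto
    next
      case False
      then obtain m' where "m = Suc m'" "m' \<ge> i" using \<open>m \<noteq> i\<close> by (cases m) auto
      then show ?thesis using del_at_nth[of i x m'] del_at_nth[of i y m'] a h m by auto
    qed
  qed
qed

lemma rot_set: "distinct x \<Longrightarrow> i < length x \<Longrightarrow> set (rot i x) = set x"
  by (auto simp: rot_def del_at_set)

lemma rot_distinct: "distinct x \<Longrightarrow> i < length x \<Longrightarrow> distinct (rot i x)"
  by (auto simp: rot_def del_at_set del_at_distinct)

lemma rot_len: "i < length x \<Longrightarrow> length (rot i x) = length x"
  by (auto simp: rot_def)

lemma swap_cons: "i < length s \<Longrightarrow> k < length s \<Longrightarrow> swap_at (v # s) (Suc i) (Suc k) = v # swap_at s i k"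
  by (simp add: swap_at_def)

locale setting =
  fixes X :: "'a set set" and d :: nat
  assumes d2: "d \<ge> 2" and finX: "finite X" and dc: "is_dcomplex X d" and unif: "uniform X d"
begin

lemma sc: "simplicial_complex X" using dc by (simp add: is_dcomplex_def)

lemma X_sub: "\<sigma> \<in> X \<Longrightarrow> \<tau> \<subseteq> \<sigma> \<Longrightarrow> \<tau> \<in> X"
  using sc by (auto simp: simplicial_complex_def)

lemma X_fin: "\<sigma> \<in> X \<Longrightarrow> finite \<sigma>"
  using sc by (auto simp: simplicial_complex_def)

lemma finV: "finite (\<Union>X)" using finX X_fin by auto

lemma finite_ocells: "finite (ocells X k)"
proof -
  have "ocells X k \<subseteq> {xs. set xs \<subseteq> \<Union>X \<and> length xs = Suc k}"
    by (auto simp: ocells_def)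
  thus ?thesis using finite_lists_length_eq[OF finV] finite_subset by blast
qed

lemma ocells_card: "xs \<in> ocells X k \<Longrightarrow> card (set xs) = Suc k"
  by (auto simp: ocells_def distinct_card)

lemma del_ocells: assumes "\<tau> \<in> ocells X (Suc k)" "i < Suc (Suc k)" shows "del_at i \<tau> \<in> ocells X k"
  using assms del_at_subset[of i \<tau>] X_sub
  by (auto simp: ocells_def del_at_distinct)

lemma dd: "Suc (d - 1) = d" using d2 by simp

lemma del_ocells': "\<tau> \<in> ocells X d \<Longrightarrow> i < Suc d \<Longrightarrow> del_at i \<tau> \<in> ocells X (d - 1)"
  using del_ocells[of \<tau> "d - 1" i] dd by simp

lemma up_finite: "finite (up_verts X \<sigma>)"
  by (rule finite_subset[OF _ finV]) (auto simp: up_verts_def)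

lemma cons_ocells: "\<sigma> \<in> ocells X (d - 1) \<Longrightarrow> v \<in> up_verts X \<sigma> \<Longrightarrow> v # \<sigma> \<in> ocells X d"
  using dd by (auto simp: ocells_def up_verts_def)

lemma deg_up: assumes "\<sigma> \<in> ocells X k" shows "deg X (set \<sigma>) = card (up_verts X \<sigma>)"
proof -
  let ?s = "set \<sigma>"
  have fs: "finite ?s" by simp
  have "{\<tau>\<in>X. ?s \<subseteq> \<tau> \<and> card \<tau> = card ?s + 1} = (\<lambda>v. insert v ?s) ` up_verts X \<sigma>"
  proof (safe)
    fix \<tau> assume t: "\<tau> \<in> X" "?s \<subseteq> \<tau>" "card \<tau> = card ?s + 1"
    have ft: "finite \<tau>" using t X_fin by auto
    have "card (\<tau> - ?s) = 1" using t ft by (simp add: card_Diff_subset finite_subset)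
    then obtain v where v: "\<tau> - ?s = {v}" by (auto simp: card_Suc_eq)
    hence "\<tau> = insert v ?s" using t by auto
    moreover have "v \<in> up_verts X \<sigma>" using v t \<open>\<tau> = insert v ?s\<close> by (auto simp: up_verts_def)
    ultimately show "\<tau> \<in> (\<lambda>v. insert v ?s) ` up_verts X \<sigma>" by auto
  next
    fix v assume "v \<in> up_verts X \<sigma>"
    then show "insert v ?s \<in> X" "card (insert v ?s) = card ?s + 1"
      by (auto simp: up_verts_def)
  qed
  moreover have "inj_on (\<lambda>v. insert v ?s) (up_verts X \<sigma>)"
    by (auto simp: inj_on_def up_verts_def)
  ultimately show ?thesis unfolding deg_def by (simp add: card_image)
qed

lemma up_nonempty: assumes "\<sigma> \<in> ocells X (d - 1)" shows "up_verts X \<sigma> \<noteq> {}"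
proof -
  have "set \<sigma> \<in> X" using assms by (auto simp: ocells_def)
  then obtain \<tau> where t: "\<tau> \<in> cells X d" "set \<sigma> \<subseteq> \<tau>" using unif by (auto simp: uniform_def)
  have "card (set \<sigma>) = d" using ocells_card[OF assms] dd by simp
  moreover have "card \<tau> = Suc d" "\<tau> \<in> X" using t by (auto simp: cells_def)
  ultimately have "\<not> \<tau> \<subseteq> set \<sigma>" by (metis Suc_n_not_le_n card_mono List.finite_set)
  then obtain v where v: "v \<in> \<tau>" "v \<notin> set \<sigma>" by auto
  have "insert v (set \<sigma>) \<in> X" using X_sub[OF \<open>\<tau>\<in>X\<close>] v t by auto
  thus ?thesis using v by (auto simp: up_verts_def)
qed

lemma deg_pos: "\<sigma> \<in> ocells X (d - 1) \<Longrightarrow> deg X (set \<sigma>) > 0"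
  using deg_up up_nonempty up_finite by (simp add: card_gt_0_iff)

lemma rot_ocells: "\<tau> \<in> ocells X k \<Longrightarrow> i < Suc k \<Longrightarrow> rot i \<tau> \<in> ocells X k"
  by (auto simp: ocells_def rot_set rot_distinct rot_len)

lemma rot_bij: assumes i: "i < Suc k" shows "bij_betw (rot i) (ocells X k) (ocells X k)"
proof -
  have inj: "inj_on (rot i) (ocells X k)"
    using i by (auto simp: inj_on_def ocells_def intro: rot_inj)
  have sub: "rot i ` ocells X k \<subseteq> ocells X k" using rot_ocells i by auto
  have "card (rot i ` ocells X k) = card (ocells X k)" using card_image[OF inj] .
  hence "rot i ` ocells X k = ocells X k" using sub finite_ocells by (simp add: card_subset_eq)
  thus ?thesis using inj by (simp add: bij_betw_def)
qed

lemma sum_rot: "i < Suc k \<Longrightarrow> (\<Sum>\<tau>\<in>ocells X k. h (rot i \<tau>)) = (\<Sum>\<tau>\<in>ocells X k. (h \<tau> :: real))"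
  using sum.reindex_bij_betw[OF rot_bij] by blast

lemma sum_cons: "(\<Sum>\<sigma>\<in>ocells X (d - 1). \<Sum>v\<in>up_verts X \<sigma>. h (v # \<sigma>)) = (\<Sum>\<tau>\<in>ocells X d. (h \<tau> :: real))"
proof -
  have "(\<Sum>\<sigma>\<in>ocells X (d - 1). \<Sum>v\<in>up_verts X \<sigma>. h (v # \<sigma>)) =
     (\<Sum>p\<in>Sigma (ocells X (d - 1)) (up_verts X). h (snd p # fst p))"
    by (subst sum.Sigma) (auto simp: finite_ocells up_finite case_prod_beta)
  also have "\<dots> = (\<Sum>\<tau>\<in>ocells X d. h \<tau>)"
  proof (rule sum.reindex_bij_witness[where i = "\<lambda>\<tau>. (tl \<tau>, hd \<tau>)" and j = "\<lambda>p. snd p # fst p"])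
    fix \<tau> assume t: "\<tau> \<in> ocells X d"
    then obtain v s where vs: "\<tau> = v # s" by (cases \<tau>) (auto simp: ocells_def)
    show "snd (tl \<tau>, hd \<tau>) # fst (tl \<tau>, hd \<tau>) = \<tau>" using vs by simp
    show "(tl \<tau>, hd \<tau>) \<in> Sigma (ocells X (d - 1)) (up_verts X)"
      using t vs dd X_sub by (auto simp: ocells_def up_verts_def)
  next
    fix p assume "p \<in> Sigma (ocells X (d - 1)) (up_verts X)"
    then show "(tl (snd p # fst p), hd (snd p # fst p)) = p" "snd p # fst p \<in> ocells X d"
      "h (snd p # fst p) = h (snd p # fst p)" using cons_ocells by auto
  qed
  finally show ?thesis .
qed

end

lemma sq_identity:
  fixes a :: "nat \<Rightarrow> real"
  shows "(\<Sum>i\<in>A. \<Sum>j\<in>A. (a i - a j)^2) = 2 * (real (card A) * (\<Sum>i\<in>A. (a i)^2) - (\<Sum>i\<in>A. a i)^2)"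
proof -
  have "(\<Sum>i\<in>A. \<Sum>j\<in>A. (a i - a j)^2) = (\<Sum>i\<in>A. \<Sum>j\<in>A. (a i)^2 + (a j)^2 - 2 * (a i * a j))"
    by (simp add: power2_diff mult.assoc)
  also have "\<dots> = (\<Sum>i\<in>A. real (card A) * (a i)^2 + (\<Sum>j\<in>A. (a j)^2) - 2 * (a i * (\<Sum>j\<in>A. a j)))"
    by (simp add: sum.distrib sum_subtractf sum_distrib_left)
  also have "\<dots> = real (card A) * (\<Sum>i\<in>A. (a i)^2) + real (card A) * (\<Sum>j\<in>A. (a j)^2) - 2 * ((\<Sum>i\<in>A. a i) * (\<Sum>j\<in>A. a j))"
    by (simp add: sum.distrib sum_subtractf sum_distrib_left sum_distrib_right mult.commute)
  finally show ?thesis by (simp add: power2_eq_square algebra_simps)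
qed

lemma cs_sum: fixes a :: "nat \<Rightarrow> real"
  shows "(\<Sum>i\<in>A. a i)^2 \<le> real (card A) * (\<Sum>i\<in>A. (a i)^2)"
proof -
  have "0 \<le> (\<Sum>i\<in>A. \<Sum>j\<in>A. (a i - a j)^2)" by (intro sum_nonneg) auto
  thus ?thesis using sq_identity[of a A] by simp
qed

lemma cs_eq: fixes a :: "nat \<Rightarrow> real"
  assumes "finite A" "(\<Sum>i\<in>A. a i)^2 = real (card A) * (\<Sum>i\<in>A. (a i)^2)" "i \<in> A" "j \<in> A"
  shows "a i = a j"
proof -
  have "(\<Sum>i\<in>A. \<Sum>j\<in>A. (a i - a j)^2) = 0" using sq_identity[of a A] assms by simp
  hence "\<forall>i\<in>A. (\<Sum>j\<in>A. (a i - a j)^2) = 0"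
    using assms(1) sum_nonneg_eq_0_iff[of A "\<lambda>i. (\<Sum>j\<in>A. (a i - a j)^2)"]
    by (simp add: sum_nonneg)
  hence "(\<Sum>j\<in>A. (a i - a j)^2) = 0" using assms(3) by blast
  hence "\<forall>j\<in>A. (a i - a j)^2 = 0"
    using assms(1) sum_nonneg_eq_0_iff[of A "\<lambda>j. (a i - a j)^2"] by simp
  hence "(a i - a j)^2 = 0" using assms(4) by blast
  thus ?thesis by simp
qed

definition ct :: "'a set set \<Rightarrow> ('a list \<Rightarrow> real) \<Rightarrow> nat \<Rightarrow> 'a list \<Rightarrow> real" where
  "ct X f i \<tau> = (-1)^i * f (del_at i \<tau>) / real (deg X (set (del_at i \<tau>)))"

lemma bd_zero: "bd X k (\<lambda>_. 0) = (\<lambda>_. 0)"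
  by (simp add: bd_def fun_eq_iff)

lemma bd_scale: "bd X k (\<lambda>x. c * F x) = (\<lambda>x. c * bd X k F x)"
  by (simp add: bd_def fun_eq_iff sum_distrib_left)

context setting begin

lemma cb_in: "\<tau> \<in> ocells X d \<Longrightarrow> cobd_top X d f \<tau> = (\<Sum>i<Suc d. ct X f i \<tau>)"
  by (simp add: cobd_top_def ct_def)

lemma cb_out: "\<tau> \<notin> ocells X d \<Longrightarrow> cobd_top X d f \<tau> = 0"
  by (simp add: cobd_top_def)

lemma del_set_eq_swap: "set (swap_at s a b) = set s" if "a < length s" "b < length s" for s :: "'a list"
  using that by simp

lemma cb_adj_swap:
  assumes f: "f \<in> forms X (d - 1)" and t: "\<tau> \<in> ocells X d" and i: "Suc i < length \<tau>"
  shows "cobd_top X d f (swap_at \<tau> i (Suc i)) = - cobd_top X d f \<tau>"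
proof -
  let ?t = "swap_at \<tau> i (Suc i)"
  let ?p = "Transposition.transpose i (Suc i)"
  have lt: "length \<tau> = Suc d" using t by (simp add: ocells_def)
  have t': "?t \<in> ocells X d" using t i by (simp add: swap_ocells)
  have key: "ct X f j ?t = - ct X f (?p j) \<tau>" if j: "j < Suc d" for j
  proof -
    have dj: "del_at j \<tau> \<in> ocells X (d - 1)" using del_ocells' t j by simp
    have ldj: "length (del_at j \<tau>) = d" using j lt by simp
    consider "j < i" | "j = i" | "j = Suc i" | "Suc i < j" by linarith
    then show ?thesis
    proof cases
      case 1
      have e: "del_at j ?t = swap_at (del_at j \<tau>) (i - 1) i" using del_swap_lt[OF 1 i] .
      have "f (del_at j ?t) = - f (del_at j \<tau>)"
        unfolding e using 1 i lt ldj by (intro forms_swap[OF f dj]) auto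
      moreover have "set (del_at j ?t) = set (del_at j \<tau>)" unfolding e using 1 i lt ldj by simp
      moreover have "?p j = j" using 1 by (simp add: transpose_def)
      ultimately show ?thesis by (simp add: ct_def)
    next
      case 4
      have e: "del_at j ?t = swap_at (del_at j \<tau>) i (Suc i)" using del_swap_gt[OF 4, of \<tau>] j lt by simp
      have "f (del_at j ?t) = - f (del_at j \<tau>)"
        unfolding e using 4 i lt ldj j by (intro forms_swap[OF f dj]) auto
      moreover have "set (del_at j ?t) = set (del_at j \<tau>)" unfolding e using 4 j lt ldj by simp
      moreover have "?p j = j" using 4 by (simp add: transpose_def)
      ultimately show ?thesis by (simp add: ct_def)
    next
      case 2
      then show ?thesis using del_swap_i[OF i] by (simp add: ct_def transpose_def)
    next
      case 3
      then show ?thesis using del_swap_Si[OF i] by (simp add: ct_def transpose_def)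
    qed
  qed
  have pp: "?p permutes {..<Suc d}" using i lt by (intro permutes_swap_id) auto
  have "cobd_top X d f ?t = (\<Sum>j<Suc d. - ct X f (?p j) \<tau>)" using cb_in[OF t'] key by simp
  also have "\<dots> = - (\<Sum>j<Suc d. ct X f j \<tau>)"
    using sum.permute[OF pp, of "\<lambda>j. ct X f j \<tau>"] by (simp add: sum_negf comp_def)
  finally show ?thesis using cb_in[OF t] by simp
qed

lemma cb_forms: assumes f: "f \<in> forms X (d - 1)" shows "cobd_top X d f \<in> forms X d"
  by (rule adj_swap_forms') (auto intro: cb_adj_swap[OF f] simp: cb_out)

lemma cb_rot: "f \<in> forms X (d - 1) \<Longrightarrow> \<tau> \<in> ocells X d \<Longrightarrow> i < Suc d \<Longrightarrow>
   cobd_top X d f (rot i \<tau>) = (-1)^i * cobd_top X d f \<tau>"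
  using forms_rot[OF cb_forms] by (simp add: ocells_def)

lemma bd_forms: assumes F: "F \<in> forms X d" shows "bd X d F \<in> forms X (d - 1)"
  unfolding forms_def
proof (safe)
  fix xs assume "xs \<notin> ocells X (d - 1)" then show "bd X d F xs = 0" by (simp add: bd_def)
next
  fix xs i k assume xs: "xs \<in> ocells X (d - 1)" and ik: "i < length xs" "k < length xs" "i \<noteq> k"
  have sx: "swap_at xs i k \<in> ocells X (d - 1)" using swap_ocells xs ik by auto
  have up: "up_verts X (swap_at xs i k) = up_verts X xs" using ik by (simp add: up_verts_def)
  have "bd X d F (swap_at xs i k) = (\<Sum>v\<in>up_verts X xs. F (swap_at (v # xs) (Suc i) (Suc k)))"
    using sx up ik by (simp add: bd_def swap_cons)
  also have "\<dots> = (\<Sum>v\<in>up_verts X xs. - F (v # xs))"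
    using ik by (intro sum.cong refl forms_swap[OF F] cons_ocells[OF xs]) auto
  finally show "bd X d F (swap_at xs i k) = - bd X d F xs" using xs by (simp add: bd_def sum_negf)
qed

lemma uplap_in: "\<sigma> \<in> ocells X (d - 1) \<Longrightarrow> uplap X d f \<sigma> = (\<Sum>v\<in>up_verts X \<sigma>. cobd_top X d f (v # \<sigma>))"
  by (simp add: uplap_def bd_def)

lemma ct0: "ct X f 0 \<tau> = f (tl \<tau>) / real (deg X (set (tl \<tau>)))"
  by (simp add: ct_def)

lemma ct_rot: "i < length \<tau> \<Longrightarrow> ct X f 0 (rot i \<tau>) = (-1)^i * ct X f i \<tau>"
  by (simp add: ct_def rot_def)

lemma Qid: assumes f: "f \<in> forms X (d - 1)"
  shows "(\<Sum>\<sigma>\<in>ocells X (d - 1). uplap X d f \<sigma> * f \<sigma> / real (deg X (set \<sigma>)))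
         = (\<Sum>\<tau>\<in>ocells X d. (cobd_top X d f \<tau>)^2) / real (Suc d)"
proof -
  let ?c = "cobd_top X d f"
  have "(\<Sum>\<sigma>\<in>ocells X (d - 1). uplap X d f \<sigma> * f \<sigma> / real (deg X (set \<sigma>)))
     = (\<Sum>\<sigma>\<in>ocells X (d - 1). \<Sum>v\<in>up_verts X \<sigma>. ?c (v # \<sigma>) * ct X f 0 (v # \<sigma>))"
    by (intro sum.cong refl) (simp add: uplap_in sum_distrib_right ct0 sum_divide_distrib)
  also have "\<dots> = (\<Sum>\<tau>\<in>ocells X d. ?c \<tau> * ct X f 0 \<tau>)" by (rule sum_cons)
  finally have L: "(\<Sum>\<sigma>\<in>ocells X (d - 1). uplap X d f \<sigma> * f \<sigma> / real (deg X (set \<sigma>))) =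
     (\<Sum>\<tau>\<in>ocells X d. ?c \<tau> * ct X f 0 \<tau>)" .
  have each: "(\<Sum>\<tau>\<in>ocells X d. ?c \<tau> * ct X f i \<tau>) = (\<Sum>\<tau>\<in>ocells X d. ?c \<tau> * ct X f 0 \<tau>)"
    if i: "i < Suc d" for i
  proof -
    have "(\<Sum>\<tau>\<in>ocells X d. ?c \<tau> * ct X f 0 \<tau>) = (\<Sum>\<tau>\<in>ocells X d. ?c (rot i \<tau>) * ct X f 0 (rot i \<tau>))"
      using sum_rot[OF i, of "\<lambda>\<tau>. ?c \<tau> * ct X f 0 \<tau>"] by simp
    also have "\<dots> = (\<Sum>\<tau>\<in>ocells X d. ?c \<tau> * ct X f i \<tau>)"
    proof (intro sum.cong refl)
      fix \<tau> assume t: "\<tau> \<in> ocells X d"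
      have "i < length \<tau>" using t i by (simp add: ocells_def)
      then show "?c (rot i \<tau>) * ct X f 0 (rot i \<tau>) = ?c \<tau> * ct X f i \<tau>"
        using cb_rot[OF f t i] ct_rot by (simp add: power_mult_distrib[symmetric])
    qed
    finally show ?thesis by simp
  qed
  have "(\<Sum>\<tau>\<in>ocells X d. (?c \<tau>)^2) = (\<Sum>\<tau>\<in>ocells X d. \<Sum>i<Suc d. ?c \<tau> * ct X f i \<tau>)"
    by (intro sum.cong refl) (simp only: power2_eq_square cb_in sum_distrib_left)
  also have "\<dots> = (\<Sum>i<Suc d. \<Sum>\<tau>\<in>ocells X d. ?c \<tau> * ct X f i \<tau>)" by (rule sum.swap)
  also have "\<dots> = (\<Sum>i<Suc d. \<Sum>\<tau>\<in>ocells X d. ?c \<tau> * ct X f 0 \<tau>)"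
    by (rule sum.cong[OF refl], rule each) simp
  also have "\<dots> = real (Suc d) * (\<Sum>\<tau>\<in>ocells X d. ?c \<tau> * ct X f 0 \<tau>)" by simp
  finally show ?thesis using L by simp
qed

lemma Nid: "(\<Sum>\<sigma>\<in>ocells X (d - 1). (f \<sigma>)^2 / real (deg X (set \<sigma>))) = (\<Sum>\<tau>\<in>ocells X d. (ct X f 0 \<tau>)^2)"
proof -
  have "(\<Sum>\<sigma>\<in>ocells X (d - 1). (f \<sigma>)^2 / real (deg X (set \<sigma>)))
     = (\<Sum>\<sigma>\<in>ocells X (d - 1). \<Sum>v\<in>up_verts X \<sigma>. (ct X f 0 (v # \<sigma>))^2)"
  proof (intro sum.cong refl)
    fix \<sigma> assume s: "\<sigma> \<in> ocells X (d - 1)"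
    have dp: "real (deg X (set \<sigma>)) > 0" using deg_pos[OF s] by simp
    show "(f \<sigma>)^2 / real (deg X (set \<sigma>)) = (\<Sum>v\<in>up_verts X \<sigma>. (ct X f 0 (v # \<sigma>))^2)"
      using dp deg_up[OF s] by (simp add: ct0 power2_eq_square)
  qed
  also have "\<dots> = (\<Sum>\<tau>\<in>ocells X d. (ct X f 0 \<tau>)^2)" by (rule sum_cons)
  finally show ?thesis .
qed

lemma Nid_i: "i < Suc d \<Longrightarrow> (\<Sum>\<tau>\<in>ocells X d. (ct X f i \<tau>)^2) = (\<Sum>\<tau>\<in>ocells X d. (ct X f 0 \<tau>)^2)"
proof -
  assume i: "i < Suc d"
  have "(\<Sum>\<tau>\<in>ocells X d. (ct X f 0 \<tau>)^2) = (\<Sum>\<tau>\<in>ocells X d. (ct X f 0 (rot i \<tau>))^2)"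
    using sum_rot[OF i, of "\<lambda>\<tau>. (ct X f 0 \<tau>)^2"] by simp
  also have "\<dots> = (\<Sum>\<tau>\<in>ocells X d. (ct X f i \<tau>)^2)"
    by (intro sum.cong refl) (use i in \<open>auto simp: ct_rot ocells_def power_mult_distrib power_even_eq[symmetric]\<close>)
  finally show ?thesis by simp
qed

end

lemma orient_eqI: "p permutes {..<length xs} \<Longrightarrow> evenperm p \<Longrightarrow> orient_eq xs (permute_list p xs)"
  by (auto simp: orient_eq_def permute_list_def)

lemma perm_list_inj: assumes "distinct xs" "p permutes {..<length xs}" "q permutes {..<length xs}"
  "permute_list p xs = permute_list q xs" shows "p = q"
proof
  fix i show "p i = q i"
  proof (cases "i < length xs")
    case True
    have "xs ! p i = xs ! q i" using assms(4) True permute_list_nth[OF assms(2) True] permute_list_nth[OF assms(3) True]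
      by simp
    moreover have "p i < length xs" "q i < length xs" using True assms(2,3) permutes_in_image by fastforce+
    ultimately show ?thesis using assms(1) nth_eq_iff_index_eq by blast
  next
    case False
    then show ?thesis using assms(2,3) by (simp add: permutes_def)
  qed
qed

lemma opp_perm: "Suc 0 < length xs \<Longrightarrow> opp xs = permute_list (Transposition.transpose 0 1) xs"
  unfolding opp_def by (rule permute_list_transpose[symmetric]) auto

lemma t01_perm: "Suc 0 < n \<Longrightarrow> Transposition.transpose 0 1 permutes {..<n}"
  by (intro permutes_swap_id) auto

lemma perm_of_lessThan: "p permutes {..<(n::nat)} \<Longrightarrow> permutation p"
  using permutes_imp_permutation[OF finite_lessThan] by blast

lemma no_both: assumes d: "distinct xs" and l: "Suc 0 < length xs"
  and a: "orient_eq xs ys" and b: "orient_eq xs (opp ys)" shows False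
proof -
  obtain p where p: "p permutes {..<length xs}" "evenperm p" "ys = permute_list p xs" using orient_eqD[OF a] by blast
  obtain q where q: "q permutes {..<length xs}" "evenperm q" "opp ys = permute_list q xs" using orient_eqD[OF b] by blast
  let ?t = "Transposition.transpose (0::nat) 1"
  have ly: "length ys = length xs" using p by simp
  have "opp ys = permute_list (p \<circ> ?t) xs"
    using opp_perm[of ys] ly l p permute_list_compose[of ?t xs p] t01_perm[OF l] by simp
  hence "q = p \<circ> ?t" using perm_list_inj[OF d q(1)] q(3) permutes_compose[OF t01_perm[OF l] p(1)] by simp
  hence "evenperm q = (evenperm p = evenperm ?t)"
    using evenperm_comp[OF perm_of_lessThan[OF p(1)] permutation_swap_id] by simp
  thus False using p q by (simp add: evenperm_swap)
qed

lemma opp_set: "Suc 0 < length xs \<Longrightarrow> set (opp xs) = set xs"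
  by (metis One_nat_def Suc_lessD opp_def swap_at_set)

lemma opp_len: "length (opp xs) = length xs" by (simp add: opp_def)

lemma induces_D: assumes "induces t \<rho>" "Suc (Suc 0) < length t"
  shows "\<exists>i<length t. set (del_at i t) = set \<rho> \<and> orient_eq (del_at i t) (if even i then \<rho> else opp \<rho>)"
proof -
  obtain i where i: "i < length t" "orient_eq (del_at i t) (if even i then \<rho> else opp \<rho>)"
    using assms(1) by (auto simp: induces_def)
  have "length (if even i then \<rho> else opp \<rho>) = length t - 1"
    using i by (simp add: orient_eq_def)
  hence "Suc 0 < length \<rho>" using assms(2) by (auto simp: opp_len split: if_splits)
  hence "set (if even i then \<rho> else opp \<rho>) = set \<rho>" by (simp add: opp_set)
  thus ?thesis using i orient_eq_set[OF i(2)] by auto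
qed

lemma opp_opp: "Suc 0 < length xs \<Longrightarrow> opp (opp xs) = xs"
  by (cases xs; cases "tl xs") (auto simp: opp_def swap_at_def)

lemma opp_ocells: "xs \<in> ocells X k \<Longrightarrow> Suc 0 < length xs \<Longrightarrow> opp xs \<in> ocells X k"
  unfolding opp_def by (rule swap_ocells) auto

context setting begin

definition FF where "FF S = disF X d S"

lemma disF_forms: assumes S: "disorientation X d S" shows "disF X d S \<in> forms X d"
  unfolding forms_def
proof (safe)
  fix xs assume "xs \<notin> ocells X d" thus "disF X d S xs = 0"
    using S by (auto simp: disF_def disorientation_def)
next
  fix xs i k assume xs: "xs \<in> ocells X d" and ik: "i < length xs" "k < length xs" "i \<noteq> k"
  let ?t = "Transposition.transpose (0::nat) 1"
  let ?u = "Transposition.transpose i k"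
  have l: "length xs = Suc d" using xs by (simp add: ocells_def)
  have l1: "Suc 0 < length xs" using l d2 by simp
  have o1: "opp xs \<in> ocells X d" using xs l1 by (rule opp_ocells)
  have sw: "swap_at xs i k \<in> ocells X d" using xs ik by (simp add: swap_ocells)
  have pt: "?t \<circ> ?u permutes {..<length xs}"
    using t01_perm[OF l1] permutes_swap_id[of i "{..<length xs}" k] ik by (intro permutes_compose) auto
  have ev: "evenperm (?t \<circ> ?u)"
    using evenperm_comp[OF permutation_swap_id permutation_swap_id, of 0 1 i k] ik by (simp add: evenperm_swap)
  have "permute_list (?t \<circ> ?u) (opp xs) = permute_list ?u (permute_list (?t \<circ> ?t) xs)"
    using opp_perm[OF l1] permute_list_compose[of "?t \<circ> ?u" xs ?t] pt t01_perm[OF l1]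
      permute_list_compose[of "?u" "permute_list ?t xs" "?t"] permutes_swap_id[of i "{..<length xs}" k] ik
    by (simp add: o_assoc)
  also have "\<dots> = swap_at xs i k" using ik by (simp add: permute_list_transpose)
  finally have "orient_eq (opp xs) (swap_at xs i k)" using orient_eqI[OF _ ev, of "opp xs"] pt
    by (simp add: opp_len)
  hence "swap_at xs i k \<in> S \<longleftrightarrow> opp xs \<in> S" using S o1 by (auto simp: disorientation_def)
  also have "\<dots> \<longleftrightarrow> xs \<notin> S" using S xs by (auto simp: disorientation_def)
  finally show "disF X d S (swap_at xs i k) = - disF X d S xs"
    using sw xs by (auto simp: disF_def)
qed

lemma AN0: assumes S: "disorientation X d S" and s: "\<sigma> \<in> ocells X (d - 1)"
  and v: "v \<in> up_verts X \<sigma>" and w: "w \<in> up_verts X \<sigma>" and vw: "v \<noteq> w"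
  and vS: "v # \<sigma> \<in> S" and wS: "w # \<sigma> \<notin> S"
  shows False
proof -
  have ls: "length \<sigma> = d" using s dd by (simp add: ocells_def)
  then obtain s0 r where sr: "\<sigma> = s0 # r" using d2 by (cases \<sigma>) auto
  have tO: "v # \<sigma> \<in> ocells X d" "w # \<sigma> \<in> ocells X d" using cons_ocells s v w by auto
  let ?t = "v # \<sigma>" let ?t' = "s0 # w # r"
  have opw: "opp (w # \<sigma>) = ?t'" by (simp add: sr opp_def swap_at_def)
  have t'S: "?t' \<in> S" using S tO(2) wS opw by (auto simp: disorientation_def)
  have vns: "v \<notin> set \<sigma>" "w \<notin> set \<sigma>" using v w by (auto simp: up_verts_def)
  have st: "set ?t = insert v (set \<sigma>)" "set ?t' = insert w (set \<sigma>)" by (auto simp: sr)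
  have ne: "set ?t \<noteq> set ?t'" using st vns vw by auto
  have "set ?t \<inter> set ?t' = set \<sigma>" using st vns vw by auto
  hence cd: "card (set ?t \<inter> set ?t') = d" using ocells_card[OF s] dd by simp
  obtain \<rho> where r1: "induces ?t \<rho>" and r2: "induces ?t' \<rho>"
    using S vS t'S ne cd unfolding disorientation_def by blast
  have lt: "Suc (Suc 0) < length ?t" "Suc (Suc 0) < length ?t'" using ls d2 sr by auto
  obtain i where i: "i < length ?t" "set (del_at i ?t) = set \<rho>" "orient_eq (del_at i ?t) (if even i then \<rho> else opp \<rho>)"
    using induces_D[OF r1 lt(1)] by blast
  obtain j where j: "j < length ?t'" "set (del_at j ?t') = set \<rho>" "orient_eq (del_at j ?t') (if even j then \<rho> else opp \<rho>)"
    using induces_D[OF r2 lt(2)] by blast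
  have dt: "distinct ?t" "distinct ?t'" using tO opw t'S S by (auto simp: ocells_def disorientation_def)
  have e: "set ?t - {?t ! i} = set ?t' - {?t' ! j}" using i j del_at_set[OF dt(1) i(1)] del_at_set[OF dt(2) j(1)] by simp
  have i0: "i = 0"
  proof (rule ccontr)
    assume "i \<noteq> 0"
    hence "?t ! i \<noteq> v" using dt(1) i(1) nth_eq_iff_index_eq[OF dt(1), of i 0] by auto
    hence "v \<in> set ?t - {?t ! i}" by simp
    hence "v \<in> set ?t' - {?t' ! j}" by (simp only: e)
    thus False using vns vw sr by auto
  qed
  have j1: "j = 1"
  proof (rule ccontr)
    assume "j \<noteq> 1"
    hence "?t' ! j \<noteq> w" using dt(2) j(1) nth_eq_iff_index_eq[OF dt(2), of j 1] by auto
    hence "w \<in> set ?t' - {?t' ! j}" using sr by simp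
    hence "w \<in> set ?t - {?t ! i}" by (simp only: e)
    thus False using vns vw sr by auto
  qed
  have "orient_eq \<sigma> \<rho>" using i i0 by simp
  moreover have "orient_eq \<sigma> (opp \<rho>)" using j j1 sr by (simp add: del_at_def)
  moreover have "distinct \<sigma>" using s by (simp add: ocells_def)
  ultimately show False using no_both ls d2 by fastforce
qed

lemma AN: assumes S: "disorientation X d S" and s: "\<sigma> \<in> ocells X (d - 1)"
  and v: "v \<in> up_verts X \<sigma>" and w: "w \<in> up_verts X \<sigma>"
  shows "disF X d S (v # \<sigma>) = disF X d S (w # \<sigma>)"
  using AN0[OF S s v w] AN0[OF S s w v] cons_ocells[OF s v] cons_ocells[OF s w]
  by (cases "v = w") (auto simp: disF_def)

lemma bdF: assumes S: "disorientation X d S" and s: "\<sigma> \<in> ocells X (d - 1)" and w: "w \<in> up_verts X \<sigma>"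
  shows "bd X d (disF X d S) \<sigma> = real (deg X (set \<sigma>)) * disF X d S (w # \<sigma>)"
  using s AN[OF S s _ w] by (simp add: bd_def deg_up[OF s])

lemma cbF: assumes S: "disorientation X d S"
  shows "cobd_top X d (bd X d (disF X d S)) = (\<lambda>x. (real d + 1) * disF X d S x)"
proof
  fix \<tau>
  show "cobd_top X d (bd X d (disF X d S)) \<tau> = (real d + 1) * disF X d S \<tau>"
  proof (cases "\<tau> \<in> ocells X d")
    case False
    then show ?thesis using disF_forms[OF S] by (simp add: cb_out forms_zero)
  next
    case t: True
    have lt: "length \<tau> = Suc d" using t by (simp add: ocells_def)
    have "ct X (bd X d (disF X d S)) i \<tau> = disF X d S \<tau>" if i: "i < Suc d" for i
    proof -
      have di: "del_at i \<tau> \<in> ocells X (d - 1)" using del_ocells'[OF t i] .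
      have dt: "distinct \<tau>" using t by (simp add: ocells_def)
      have up: "\<tau> ! i \<in> up_verts X (del_at i \<tau>)"
        using del_at_set[OF dt] i lt t by (auto simp: up_verts_def ocells_def insert_absorb)
      have dp: "real (deg X (set (del_at i \<tau>))) > 0" using deg_pos[OF di] by simp
      have "ct X (bd X d (disF X d S)) i \<tau> = (-1)^i * disF X d S (rot i \<tau>)"
        using bdF[OF S di up] dp by (simp add: ct_def rot_def)
      also have "\<dots> = disF X d S \<tau>" using forms_rot[OF disF_forms[OF S] t] i lt
        by (simp add: power_mult_distrib[symmetric] power_even_eq[symmetric])
      finally show ?thesis .
    qed
    hence "cobd_top X d (bd X d (disF X d S)) \<tau> = (\<Sum>i<Suc d. disF X d S \<tau>)"
      using cb_in[OF t] by (metis (no_types, lifting) lessThan_iff sum.cong)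
    thus ?thesis by simp
  qed
qed

lemma exists_dcell: "\<exists>\<tau>. \<tau> \<in> ocells X d"
proof -
  obtain c where c: "c \<in> cells X d" using dc by (auto simp: is_dcomplex_def)
  have "finite c" using c X_fin by (auto simp: cells_def)
  then obtain xs where "set xs = c" "distinct xs" using finite_distinct_list by blast
  thus ?thesis using c by (auto simp: ocells_def cells_def distinct_card intro!: exI[of _ xs])
qed

lemma part4a: assumes S: "disorientation X d S"
  shows "uplap X d (bd X d (disF X d S)) = (\<lambda>x. (real d + 1) * bd X d (disF X d S) x)
         \<and> bd X d (disF X d S) \<noteq> (\<lambda>_. 0)"
proof
  show "uplap X d (bd X d (disF X d S)) = (\<lambda>x. (real d + 1) * bd X d (disF X d S) x)"
    unfolding uplap_def cbF[OF S] bd_scale ..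
  obtain \<tau> where t: "\<tau> \<in> ocells X d" using exists_dcell by blast
  then obtain v r where vr: "\<tau> = v # r" by (cases \<tau>) (auto simp: ocells_def)
  have r: "r \<in> ocells X (d - 1)" using del_ocells'[OF t, of 0] vr by simp
  have v: "v \<in> up_verts X r" using t vr by (auto simp: ocells_def up_verts_def)
  have "bd X d (disF X d S) r \<noteq> 0"
    using bdF[OF S r v] deg_pos[OF r] t vr by (simp add: disF_def)
  thus "bd X d (disF X d S) \<noteq> (\<lambda>_. 0)" by auto
qed

end

lemma orient_ocells: "xs \<in> ocells X k \<Longrightarrow> orient_eq xs ys \<Longrightarrow> ys \<in> ocells X k"
  using orient_eqD[of xs ys] by (auto simp: ocells_def)

lemma f_opp: "f \<in> forms X k \<Longrightarrow> x \<in> ocells X k \<Longrightarrow> Suc 0 < length x \<Longrightarrow> f (opp x) = - f x"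
  unfolding opp_def by (rule forms_swap) auto

lemma f_adj: "f \<in> forms X k \<Longrightarrow> x \<in> ocells X k \<Longrightarrow> Suc 0 < length x \<Longrightarrow>
   f (if even i then x else opp x) = (-1)^i * f x"
  using f_opp by (auto)

lemma E_or: assumes f: "f \<in> forms X k" and xs: "xs \<in> ocells X k" and ys: "ys \<in> ocells X k"
  and st: "set xs = set ys" and pos: "f xs * f ys > 0" shows "orient_eq xs ys"
proof -
  have "mset ys = mset xs" using xs ys st by (simp add: ocells_def set_eq_iff_mset_eq_distinct)
  then obtain p where p: "p permutes {..<length xs}" "permute_list p xs = ys"
    using mset_eq_permutation by metis
  have "f ys = real_of_int (sign p) * f xs" using forms_perm[OF f xs p(1)] p(2) by simp
  hence "evenperm p" using pos by (cases "evenperm p") (auto simp: sign_def mult_less_0_iff)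
  thus ?thesis using orient_eqI[OF p(1)] p(2) by simp
qed

context setting begin

definition NN :: "('a list \<Rightarrow> real) \<Rightarrow> real" where
  "NN f = (\<Sum>\<sigma>\<in>ocells X (d - 1). (f \<sigma>)^2 / real (deg X (set \<sigma>)))"

lemma pointwise_cs: "\<tau> \<in> ocells X d \<Longrightarrow>
   (cobd_top X d f \<tau>)^2 \<le> real (Suc d) * (\<Sum>i<Suc d. (ct X f i \<tau>)^2)"
  using cs_sum[of "\<lambda>i. ct X f i \<tau>" "{..<Suc d}"] by (simp add: cb_in)

lemma sum_bound_eq: "(\<Sum>\<tau>\<in>ocells X d. real (Suc d) * (\<Sum>i<Suc d. (ct X f i \<tau>)^2)) = real (Suc d) ^ 2 * NN f"
proof -
  have "(\<Sum>\<tau>\<in>ocells X d. real (Suc d) * (\<Sum>i<Suc d. (ct X f i \<tau>)^2))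
      = real (Suc d) * (\<Sum>i<Suc d. \<Sum>\<tau>\<in>ocells X d. (ct X f i \<tau>)^2)"
    by (simp add: sum_distrib_left sum.swap[of _ "ocells X d"])
  also have "\<dots> = real (Suc d) * (\<Sum>i<Suc d. \<Sum>\<tau>\<in>ocells X d. (ct X f 0 \<tau>)^2)"
    by (rule arg_cong[where f = "\<lambda>x. _ * x"], rule sum.cong[OF refl], rule Nid_i) simp
  also have "\<dots> = real (Suc d) ^ 2 * NN f" using Nid[of f] by (simp add: NN_def power2_eq_square)
  finally show ?thesis .
qed

lemma cb_sq_le: "(\<Sum>\<tau>\<in>ocells X d. (cobd_top X d f \<tau>)^2) \<le> real (Suc d) ^ 2 * NN f"
proof -
  have "(\<Sum>\<tau>\<in>ocells X d. (cobd_top X d f \<tau>)^2) \<le> (\<Sum>\<tau>\<in>ocells X d. real (Suc d) * (\<Sum>i<Suc d. (ct X f i \<tau>)^2))"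
    by (rule sum_mono) (rule pointwise_cs)
  thus ?thesis using sum_bound_eq[of f] by linarith
qed

lemma NN_pos: assumes f: "f \<in> forms X (d - 1)" and nz: "f \<noteq> (\<lambda>_. 0)" shows "NN f > 0"
proof -
  obtain x where x: "f x \<noteq> 0" using nz by auto
  have xo: "x \<in> ocells X (d - 1)" using forms_zero[OF f] x by blast
  show ?thesis unfolding NN_def
    by (rule sum_pos2[OF finite_ocells xo]) (use x deg_pos xo in auto)
qed

lemma Q_eig: assumes "uplap X d f = (\<lambda>x. lam * f x)"
  shows "(\<Sum>\<sigma>\<in>ocells X (d - 1). uplap X d f \<sigma> * f \<sigma> / real (deg X (set \<sigma>))) = lam * NN f"
  by (simp add: assms NN_def sum_distrib_left power2_eq_square mult.assoc)

lemma part2: assumes f: "f \<in> forms X (d - 1)" and nz: "f \<noteq> (\<lambda>_. 0)" and e: "uplap X d f = (\<lambda>x. lam * f x)"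
  shows "0 \<le> lam \<and> lam \<le> real d + 1"
proof -
  have N: "NN f > 0" using NN_pos[OF f nz] .
  have q: "lam * NN f = (\<Sum>\<tau>\<in>ocells X d. (cobd_top X d f \<tau>)^2) / real (Suc d)"
    using Q_eig[OF e] Qid[OF f] by simp
  have "0 \<le> (\<Sum>\<tau>\<in>ocells X d. (cobd_top X d f \<tau>)^2)" by (simp add: sum_nonneg)
  hence "0 \<le> lam * NN f" using q by simp
  hence l0: "0 \<le> lam" using N by (simp add: zero_le_mult_iff)
  have "(\<Sum>\<tau>\<in>ocells X d. (cobd_top X d f \<tau>)^2) / real (Suc d) \<le> real (Suc d) ^ 2 * NN f / real (Suc d)"
    by (rule divide_right_mono) (use cb_sq_le[of f] in auto)
  also have "\<dots> = real (Suc d) * NN f" by (simp add: power2_eq_square)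
  finally have "lam * NN f \<le> real (Suc d) * NN f" using q by simp
  hence "lam \<le> real (Suc d)" using N by simp
  thus ?thesis using l0 by simp
qed

lemma part3: "{f\<in>forms X (d - 1). uplap X d f = (\<lambda>_. 0)} = {f\<in>forms X (d - 1). cobd_top X d f = (\<lambda>_. 0)}"
proof (safe)
  fix f assume f: "f \<in> forms X (d - 1)" and u: "uplap X d f = (\<lambda>_. 0)"
  have "uplap X d f = (\<lambda>x. 0 * f x)" using u by simp
  hence "(\<Sum>\<tau>\<in>ocells X d. (cobd_top X d f \<tau>)^2) = 0" using Q_eig Qid[OF f] by simp
  hence "\<forall>\<tau>\<in>ocells X d. (cobd_top X d f \<tau>)^2 = 0"
    using sum_nonneg_eq_0_iff[of "ocells X d" "\<lambda>\<tau>. (cobd_top X d f \<tau>)^2"] finite_ocells by simp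
  thus "cobd_top X d f = (\<lambda>_. 0)" using cb_out by fastforce
next
  fix f assume "cobd_top X d f = (\<lambda>_. 0)"
  thus "uplap X d f = (\<lambda>_. 0)" by (simp add: uplap_def bd_zero)
qed

end

context setting begin

lemma dlen: "\<sigma> \<in> ocells X (d - 1) \<Longrightarrow> length \<sigma> = d" using dd by (simp add: ocells_def)
lemma dlen': "\<tau> \<in> ocells X d \<Longrightarrow> length \<tau> = Suc d" by (simp add: ocells_def)

lemma ct_orient: assumes f: "f \<in> forms X (d - 1)" and t: "\<tau> \<in> ocells X d" and i: "i < Suc d"
  and s: "\<sigma> \<in> ocells X (d - 1)" and st: "set (del_at i \<tau>) = set \<sigma>"
  and o: "orient_eq (del_at i \<tau>) (if even i then \<sigma> else opp \<sigma>)"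
  shows "ct X f i \<tau> = f \<sigma> / real (deg X (set \<sigma>))"
proof -
  have di: "del_at i \<tau> \<in> ocells X (d - 1)" using del_ocells'[OF t i] .
  have "f (if even i then \<sigma> else opp \<sigma>) = f (del_at i \<tau>)" using forms_orient[OF f di o] by simp
  moreover have "f (if even i then \<sigma> else opp \<sigma>) = (-1)^i * f \<sigma>"
    using f_adj[OF f s] dlen[OF s] d2 by simp
  ultimately have "f (del_at i \<tau>) = (-1)^i * f \<sigma>" by simp
  thus ?thesis by (simp add: ct_def st power_mult_distrib[symmetric] power_even_eq[symmetric] mult.assoc[symmetric])
qed

lemma opp_ocells_rev: assumes "opp x \<in> ocells X (d - 1)" shows "x \<in> ocells X (d - 1)"
proof -
  have l: "Suc 0 < length x" using dlen[OF assms] d2 by (simp add: opp_len)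
  have "opp (opp x) \<in> ocells X (d - 1)" using opp_ocells[OF assms] l by (simp add: opp_len)
  thus ?thesis using opp_opp[OF l] by simp
qed

lemma adj_ocells_rev: assumes "(if even i then x else opp x) \<in> ocells X (d - 1)" shows "x \<in> ocells X (d - 1)"
  using assms opp_ocells_rev by (auto split: if_splits)

context
  fixes f assumes f: "f \<in> forms X (d - 1)" and nz: "f \<noteq> (\<lambda>_. 0)"
  and e: "uplap X d f = (\<lambda>x. (real d + 1) * f x)"
begin

lemma cbsum: "(\<Sum>\<tau>\<in>ocells X d. (cobd_top X d f \<tau>)^2) = real (Suc d) ^ 2 * NN f"
proof -
  have "(real d + 1) * NN f = (\<Sum>\<tau>\<in>ocells X d. (cobd_top X d f \<tau>)^2) / real (Suc d)"
    using Q_eig[OF e] Qid[OF f] by simp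
  thus ?thesis by (simp add: field_simps power2_eq_square)
qed

lemma pw_eq: "\<tau> \<in> ocells X d \<Longrightarrow> (cobd_top X d f \<tau>)^2 = real (Suc d) * (\<Sum>i<Suc d. (ct X f i \<tau>)^2)"
proof -
  assume t: "\<tau> \<in> ocells X d"
  let ?g = "\<lambda>\<tau>. real (Suc d) * (\<Sum>i<Suc d. (ct X f i \<tau>)^2) - (cobd_top X d f \<tau>)^2"
  have "(\<Sum>\<tau>\<in>ocells X d. ?g \<tau>) = 0"
    using cbsum sum_bound_eq[of f] by (simp add: sum_subtractf)
  moreover have "\<forall>\<tau>\<in>ocells X d. 0 \<le> ?g \<tau>" using pointwise_cs by simp
  ultimately have "\<forall>\<tau>\<in>ocells X d. ?g \<tau> = 0"
    using sum_nonneg_eq_0_iff[of "ocells X d" ?g] finite_ocells by simp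
  thus ?thesis using t by simp
qed

lemma ct_eq: "\<tau> \<in> ocells X d \<Longrightarrow> i < Suc d \<Longrightarrow> ct X f i \<tau> = ct X f 0 \<tau>"
  using cs_eq[of "{..<Suc d}" "\<lambda>i. ct X f i \<tau>" i 0] pw_eq cb_in by simp

lemma cb_ct0: "\<tau> \<in> ocells X d \<Longrightarrow> cobd_top X d f \<tau> = real (Suc d) * ct X f 0 \<tau>"
proof -
  assume t: "\<tau> \<in> ocells X d"
  have "cobd_top X d f \<tau> = (\<Sum>i<Suc d. ct X f 0 \<tau>)"
    unfolding cb_in[OF t] by (rule sum.cong[OF refl], rule ct_eq[OF t]) simp
  thus ?thesis by simp
qed

definition hval where "hval \<sigma> = \<bar>f \<sigma>\<bar> / real (deg X (set \<sigma>))"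

lemma nbr_step: assumes s: "\<sigma> \<in> ocells X (d - 1)" and n: "nbr X d \<sigma> \<sigma>'"
  shows "\<sigma>' \<in> ocells X (d - 1) \<and> hval \<sigma>' = hval \<sigma>"
proof -
  obtain \<tau> where t: "\<tau> \<in> ocells X d" "induces \<tau> \<sigma>" "induces \<tau> (opp \<sigma>')" using n by (auto simp: nbr_def)
  have lt: "Suc (Suc 0) < length \<tau>" using dlen'[OF t(1)] d2 by simp
  obtain i where i: "i < length \<tau>" "set (del_at i \<tau>) = set \<sigma>" "orient_eq (del_at i \<tau>) (if even i then \<sigma> else opp \<sigma>)"
    using induces_D[OF t(2) lt] by blast
  obtain j where j: "j < length \<tau>" "set (del_at j \<tau>) = set (opp \<sigma>')"
      "orient_eq (del_at j \<tau>) (if even j then opp \<sigma>' else opp (opp \<sigma>'))"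
    using induces_D[OF t(3) lt] by blast
  have i': "i < Suc d" "j < Suc d" using i j dlen'[OF t(1)] by auto
  have a1: "ct X f i \<tau> = f \<sigma> / real (deg X (set \<sigma>))" using ct_orient[OF f t(1) i'(1) s i(2,3)] .
  have "(if even j then opp \<sigma>' else opp (opp \<sigma>')) \<in> ocells X (d - 1)"
    using orient_ocells[OF del_ocells'[OF t(1) i'(2)] j(3)] .
  hence os: "opp \<sigma>' \<in> ocells X (d - 1)" by (rule adj_ocells_rev)
  hence s': "\<sigma>' \<in> ocells X (d - 1)" by (rule opp_ocells_rev)
  have a2: "ct X f j \<tau> = f (opp \<sigma>') / real (deg X (set (opp \<sigma>')))" using ct_orient[OF f t(1) i'(2) os j(2,3)] .
  have l': "Suc 0 < length \<sigma>'" using dlen[OF s'] d2 by simp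
  have a2': "ct X f j \<tau> = - f \<sigma>' / real (deg X (set \<sigma>'))" using a2 f_opp[OF f s' l'] opp_set[OF l'] by simp
  have "ct X f i \<tau> = ct X f j \<tau>" using ct_eq[OF t(1) i'(1)] ct_eq[OF t(1) i'(2)] by simp
  hence "f \<sigma> / real (deg X (set \<sigma>)) = - f \<sigma>' / real (deg X (set \<sigma>'))" using a1 a2' by simp
  hence "\<bar>f \<sigma> / real (deg X (set \<sigma>))\<bar> = \<bar>f \<sigma>' / real (deg X (set \<sigma>'))\<bar>" by simp
  hence "hval \<sigma> = hval \<sigma>'" unfolding hval_def by (simp add: abs_divide)
  thus ?thesis using s' by simp
qed

lemma all_nonzero: assumes conn: "dconnected X d" and s: "\<sigma> \<in> ocells X (d - 1)" shows "f \<sigma> \<noteq> 0"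
proof -
  obtain s0 where s0: "f s0 \<noteq> 0" using nz by auto
  have s0o: "s0 \<in> ocells X (d - 1)" using forms_zero[OF f] s0 by blast
  have "(nbr X d)\<^sup>*\<^sup>* s0 \<sigma>" using conn s0o s by (auto simp: dconnected_def)
  hence "\<sigma> \<in> ocells X (d - 1) \<and> hval \<sigma> = hval s0"
  proof (induction rule: rtranclp_induct)
    case base then show ?case using s0o by simp
  next
    case (step y z) then show ?case using nbr_step by metis
  qed
  moreover have "hval s0 > 0" using s0 deg_pos[OF s0o] by (simp add: hval_def)
  ultimately show ?thesis by (auto simp: hval_def)
qed

lemma cb_nonzero: assumes conn: "dconnected X d" and t: "\<tau> \<in> ocells X d" shows "cobd_top X d f \<tau> \<noteq> 0"
proof -
  have tl: "tl \<tau> \<in> ocells X (d - 1)" using del_ocells'[OF t, of 0] by simp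
  show ?thesis using cb_ct0[OF t] all_nonzero[OF conn tl] deg_pos[OF tl] by (simp add: ct0)
qed

end
end

context setting begin

context
  fixes f assumes f: "f \<in> forms X (d - 1)" and nz: "f \<noteq> (\<lambda>_. 0)"
  and e: "uplap X d f = (\<lambda>x. (real d + 1) * f x)" and conn: "dconnected X d"
begin

abbreviation "cf \<equiv> cobd_top X d f"

lemma pos_ct: assumes t: "t \<in> ocells X d" "cf t > 0" and i: "i < Suc d"
  shows "(-1)^i * f (del_at i t) > 0"
proof -
  have "ct X f i t > 0" using cb_ct0[OF f nz e t(1)] ct_eq[OF f nz e t(1) i] t(2)
    by (simp add: zero_less_mult_iff)
  moreover have "real (deg X (set (del_at i t))) > 0" using deg_pos[OF del_ocells'[OF t(1) i]] by simp
  ultimately show ?thesis by (simp add: ct_def zero_less_divide_iff)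
qed

lemma other_vertex: assumes t: "t \<in> ocells X d" "t' \<in> ocells X d" "set t \<noteq> set t'"
  shows "\<exists>i<Suc d. t ! i \<notin> set t'"
proof (rule ccontr)
  assume "\<not> ?thesis"
  hence "set t \<subseteq> set t'" using dlen'[OF t(1)] by (auto simp: in_set_conv_nth)
  moreover have "card (set t) = card (set t')" using ocells_card t by simp
  ultimately show False using t(3) card_subset_eq by (metis List.finite_set)
qed

lemma face_eq: assumes t: "t \<in> ocells X d" "t' \<in> ocells X d" and i: "i < Suc d" "t ! i \<notin> set t'"
  and c: "card (set t \<inter> set t') = d"
  shows "set (del_at i t) = set t \<inter> set t'"
proof -
  have dt: "distinct t" using t by (simp add: ocells_def)
  have s: "set (del_at i t) = set t - {t ! i}" using del_at_set[OF dt] i dlen'[OF t(1)] by simp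
  have "set t \<inter> set t' \<subseteq> set t - {t ! i}" using i by auto
  moreover have "card (set t - {t ! i}) = d" using ocells_card[OF t(1)] i dlen'[OF t(1)] by simp
  ultimately have "set t \<inter> set t' = set t - {t ! i}" using c card_subset_eq by (metis finite_Diff List.finite_set)
  thus ?thesis using s by simp
qed

lemma disor: "disorientation X d {t \<in> ocells X d. cf t > 0}" (is "disorientation X d ?S")
  unfolding disorientation_def
proof (intro conjI ballI allI impI)
  show "?S \<subseteq> ocells X d" by auto
next
  fix t t' assume t: "t \<in> ocells X d" and o: "orient_eq t t'"
  show "t \<in> ?S \<longleftrightarrow> t' \<in> ?S" using forms_orient[OF cb_forms[OF f] t o] t by auto
next
  fix t assume t: "t \<in> ocells X d"
  have l: "Suc 0 < length t" using dlen'[OF t] d2 by simp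
  have "cf (opp t) = - cf t" using f_opp[OF cb_forms[OF f] t l] .
  moreover have "opp t \<in> ocells X d" using opp_ocells[OF t l] .
  moreover have "cf t \<noteq> 0" using cb_nonzero[OF f nz e conn t] .
  ultimately show "t \<in> ?S \<longleftrightarrow> opp t \<notin> ?S" using t by auto
next
  fix t t' assume tS: "t \<in> ?S" and t'S: "t' \<in> ?S" and h: "set t \<noteq> set t' \<and> card (set t \<inter> set t') = d"
  have t: "t \<in> ocells X d" "cf t > 0" and t': "t' \<in> ocells X d" "cf t' > 0" using tS t'S by auto
  obtain i where i: "i < Suc d" "t ! i \<notin> set t'" using other_vertex[OF t(1) t'(1)] h by blast
  obtain j where j: "j < Suc d" "t' ! j \<notin> set t" using other_vertex[OF t'(1) t(1)] h by metis
  have fi: "set (del_at i t) = set t \<inter> set t'" using face_eq[OF t(1) t'(1) i] h by simp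
  have fj: "set (del_at j t') = set t \<inter> set t'" using face_eq[OF t'(1) t(1) j] h by (simp add: Int_commute)
  define D where "D = del_at i t"
  define D' where "D' = del_at j t'"
  have Do: "D \<in> ocells X (d - 1)" "D' \<in> ocells X (d - 1)" unfolding D_def D'_def
    using del_ocells' t(1) t'(1) i j by auto
  have lD: "Suc 0 < length D" using dlen[OF Do(1)] d2 by simp
  define \<rho> where "\<rho> = (if even i then D else opp D)"
  have \<rho>o: "\<rho> \<in> ocells X (d - 1)" using Do(1) opp_ocells[OF Do(1) lD] by (simp add: \<rho>_def)
  have l\<rho>: "Suc 0 < length \<rho>" using dlen[OF \<rho>o] d2 by simp
  have f\<rho>: "f \<rho> > 0" using pos_ct[OF t i(1)] f_adj[OF f Do(1) lD, of i] by (simp add: \<rho>_def D_def)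
  have ind1: "induces t \<rho>" unfolding induces_def
    using i dlen'[OF t(1)] opp_opp[OF lD] orient_eq_refl
    by (intro exI[of _ i]) (auto simp: \<rho>_def D_def)
  define T where "T = (if even j then \<rho> else opp \<rho>)"
  have To: "T \<in> ocells X (d - 1)" using \<rho>o opp_ocells[OF \<rho>o l\<rho>] by (simp add: T_def)
  have fT: "f T = (-1)^j * f \<rho>" using f_adj[OF f \<rho>o l\<rho>] by (simp add: T_def)
  have pj: "(-1)^j * f D' > 0" using pos_ct[OF t' j(1)] by (simp add: D'_def)
  have eq: "f D' * f T = ((-1)^j * f D') * f \<rho>" unfolding fT by (simp only: mult_ac)
  have pos: "f D' * f T > 0" unfolding eq using mult_pos_pos[OF pj f\<rho>] .
  have "set T = set \<rho>" using opp_set[OF l\<rho>] by (simp add: T_def)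
  also have "\<dots> = set D" using opp_set[OF lD] by (simp add: \<rho>_def)
  finally have sT: "set D' = set T" using fi fj by (simp add: D_def D'_def)
  have "orient_eq D' T" using E_or[OF f Do(2) To sT pos] .
  hence ind2: "induces t' \<rho>" unfolding induces_def using j dlen'[OF t'(1)]
    by (intro exI[of _ j]) (simp add: D'_def T_def)
  show "\<exists>\<sigma>. induces t \<sigma> \<and> induces t' \<sigma>" using ind1 ind2 by blast
qed

end
end

interpretation fs: vector_space "\<lambda>(c::real) (f::'b \<Rightarrow> real) x. c * f x"
  by unfold_locales (auto simp: fun_eq_iff algebra_simps)

lemma mult_up_fs: "mult_up Y k lam = fs.dim (eigenspace_up Y k lam)"
  unfolding mult_up_def ..

lemma sum_fun_app: "sum g A x = (\<Sum>a\<in>A. g a x)"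
  by (induction A rule: infinite_finite_induct) auto

lemma bd_add: "bd Y k (\<lambda>x. F x + G x) = (\<lambda>x. bd Y k F x + bd Y k G x)"
  by (simp add: bd_def fun_eq_iff sum.distrib)

lemma cb_add: "cobd_top Y k (\<lambda>x. F x + G x) = (\<lambda>x. cobd_top Y k F x + cobd_top Y k G x)"
  by (simp add: cobd_top_def fun_eq_iff sum.distrib add_divide_distrib distrib_left)

lemma cb_scale: "cobd_top Y k (\<lambda>x. c * F x) = (\<lambda>x. c * cobd_top Y k F x)"
  by (simp add: cobd_top_def fun_eq_iff sum_distrib_left mult_ac times_divide_eq_right del: sum.lessThan_Suc)

lemma uplap_add: "uplap Y k (\<lambda>x. F x + G x) = (\<lambda>x. uplap Y k F x + uplap Y k G x)"
  by (simp add: uplap_def cb_add bd_add)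

lemma uplap_scale: "uplap Y k (\<lambda>x. c * F x) = (\<lambda>x. c * uplap Y k F x)"
  by (simp add: uplap_def cb_scale bd_scale)

lemma uplap_zero: "uplap Y k (\<lambda>_. 0) = (\<lambda>_. 0)"
  using uplap_scale[of Y k 0 "\<lambda>_. 0"] by simp

lemma forms_add: "F \<in> forms Y k \<Longrightarrow> G \<in> forms Y k \<Longrightarrow> (\<lambda>x. F x + G x) \<in> forms Y k"
  by (simp add: forms_def)

lemma forms_scale: "F \<in> forms Y k \<Longrightarrow> (\<lambda>x. c * F x) \<in> forms Y k"
  by (simp add: forms_def)

lemma eig_subspace: "fs.subspace (eigenspace_up Y k lam)"
  unfolding fs.subspace_def eigenspace_up_def
proof (intro conjI ballI allI)
  show "0 \<in> {f \<in> forms Y (k - 1). uplap Y k f = (\<lambda>x. lam * f x)}"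
    by (simp add: zero_fun_def forms_def uplap_zero)
next
  fix x y assume a: "x \<in> {f \<in> forms Y (k - 1). uplap Y k f = (\<lambda>x. lam * f x)}"
    "y \<in> {f \<in> forms Y (k - 1). uplap Y k f = (\<lambda>x. lam * f x)}"
  have xy: "x + y = (\<lambda>a. x a + y a)" by (simp add: fun_eq_iff)
  have f: "(\<lambda>a. x a + y a) \<in> forms Y (k - 1)" using a by (intro forms_add) auto
  have u: "uplap Y k (\<lambda>a. x a + y a) = (\<lambda>a. lam * (x a + y a))"
    unfolding uplap_add using a by (simp add: distrib_left)
  show "x + y \<in> {f \<in> forms Y (k - 1). uplap Y k f = (\<lambda>x. lam * f x)}"
    unfolding xy mem_Collect_eq by (intro conjI f) (simp only: u)
next
  fix c and x :: "'a list \<Rightarrow> real" assume a: "x \<in> {f \<in> forms Y (k - 1). uplap Y k f = (\<lambda>x. lam * f x)}"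
  have f: "(\<lambda>a. c * x a) \<in> forms Y (k - 1)" using a by (intro forms_scale) auto
  have u: "uplap Y k (\<lambda>a. c * x a) = (\<lambda>a. lam * (c * x a))"
    unfolding uplap_scale using a by (auto simp: fun_eq_iff)
  show "(\<lambda>xa. c * x xa) \<in> {f \<in> forms Y (k - 1). uplap Y k f = (\<lambda>x. lam * f x)}"
    unfolding mem_Collect_eq by (intro conjI f) (simp only: u)
qed

definition PC :: "'a set set \<Rightarrow> ('a list \<Rightarrow> real) \<Rightarrow> 'a list \<Rightarrow> real" where
  "PC C f = (\<lambda>xs. if set xs \<in> C then f xs else 0)"

context setting begin

abbreviation "RR \<equiv> (adj X d)\<^sup>*"

lemma adj_sym: "sym (adj X d)"
  by (auto simp: sym_def adj_def Un_commute)

lemma RR_sym: "(a, b) \<in> RR \<Longrightarrow> (b, a) \<in> RR"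
  using sym_rtrancl[OF adj_sym] by (auto simp: sym_def)

lemma comp_form: "C \<in> components X d \<Longrightarrow> \<exists>c\<in>cells X (d - 1). C = RR `` {c}"
  by (auto simp: components_def quotient_def)

lemma comp_closed: "C \<in> components X d \<Longrightarrow> s \<in> C \<Longrightarrow> (s, s') \<in> RR \<Longrightarrow> s' \<in> C"
  using comp_form by (metis Image_singleton_iff rtrancl_trans)

lemma comp_closed': "C \<in> components X d \<Longrightarrow> s \<in> C \<Longrightarrow> (s', s) \<in> RR \<Longrightarrow> s' \<in> C"
  using comp_closed RR_sym by blast

lemma comp_cells: "C \<in> components X d \<Longrightarrow> C \<subseteq> cells X (d - 1)"
proof
  fix s assume C: "C \<in> components X d" and s: "s \<in> C"
  obtain c where c: "c \<in> cells X (d - 1)" "C = RR `` {c}" using comp_form[OF C] by blast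
  have "(c, s) \<in> RR" using s c by auto
  thus "s \<in> cells X (d - 1)"
    using c(1) by (induction rule: rtrancl_induct) (auto simp: adj_def)
qed

lemma comp_unique: "C \<in> components X d \<Longrightarrow> C' \<in> components X d \<Longrightarrow> s \<in> C \<Longrightarrow> s \<in> C' \<Longrightarrow> C = C'"
proof -
  assume C: "C \<in> components X d" and C': "C' \<in> components X d" and s: "s \<in> C" "s \<in> C'"
  obtain c where c: "C = RR `` {c}" using comp_form[OF C] by blast
  obtain c' where c': "C' = RR `` {c'}" using comp_form[OF C'] by blast
  show "C = C'"
  proof (safe)
    fix x assume "x \<in> C"
    hence "(s, x) \<in> RR" using s c RR_sym by (meson Image_singleton_iff rtrancl_trans)
    thus "x \<in> C'" using comp_closed[OF C' s(2)] by simp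
  next
    fix x assume "x \<in> C'"
    hence "(s, x) \<in> RR" using s c' RR_sym by (meson Image_singleton_iff rtrancl_trans)
    thus "x \<in> C" using comp_closed[OF C s(1)] by simp
  qed
qed

lemma comp_exists: "s \<in> cells X (d - 1) \<Longrightarrow> \<exists>C\<in>components X d. s \<in> C"
  by (auto simp: components_def quotient_def intro!: bexI[of _ s])

lemma finite_comps: "finite (components X d)"
proof -
  have "finite (cells X (d - 1))" using finX by (simp add: cells_def)
  hence "finite (Pow (cells X (d - 1)))" by simp
  moreover have "components X d \<subseteq> Pow (cells X (d - 1))" using comp_cells by auto
  ultimately show ?thesis using finite_subset by blast
qed

lemma same_top: assumes s: "s \<in> cells X (d - 1)" "s' \<in> cells X (d - 1)" and T: "T \<in> cells X d"
  and sub: "s \<subseteq> T" "s' \<subseteq> T" shows "(s, s') \<in> RR"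
proof (cases "s = s'")
  case True then show ?thesis by simp
next
  case False
  have cs: "card s = d" "card s' = d" "card T = Suc d" using s T dd by (auto simp: cells_def)
  have fT: "finite T" using T X_fin by (auto simp: cells_def)
  have "\<not> s' \<subseteq> s" using False cs card_subset_eq[of s s'] fT sub finite_subset by metis
  hence "s \<subset> s \<union> s'" by auto
  hence "card s < card (s \<union> s')" using fT sub by (meson finite_subset le_sup_iff psubset_card_mono)
  moreover have "card (s \<union> s') \<le> card T" using fT sub by (simp add: card_mono)
  ultimately have "card (s \<union> s') = card T" using cs by linarith
  hence "s \<union> s' = T" using fT sub card_subset_eq by (metis le_sup_iff)
  hence "(s, s') \<in> adj X d" using s T by (simp add: adj_def)
  thus ?thesis by simp
qed

lemma ocell_cells: "xs \<in> ocells X k \<Longrightarrow> set xs \<in> cells X k"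
  by (auto simp: ocells_def cells_def distinct_card)

lemma face_rel: assumes t: "\<tau> \<in> ocells X d" and i: "i < Suc d" and j: "j < Suc d"
  shows "(set (del_at i \<tau>), set (del_at j \<tau>)) \<in> RR"
  using same_top[OF ocell_cells[OF del_ocells'[OF t i]] ocell_cells[OF del_ocells'[OF t j]] ocell_cells[OF t]]
    del_at_subset[of i \<tau>] del_at_subset[of j \<tau>] by blast

lemma face_comp: assumes C: "C \<in> components X d" and t: "\<tau> \<in> ocells X d" and i: "i < Suc d"
  shows "set (del_at i \<tau>) \<in> C \<longleftrightarrow> set (tl \<tau>) \<in> C"
  using face_rel[OF t i, of 0] face_rel[OF t _ i, of 0] comp_closed[OF C] by auto

end

context setting begin

lemma uplap_out: "\<sigma> \<notin> ocells X (d - 1) \<Longrightarrow> uplap X d h \<sigma> = 0"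
  by (simp add: uplap_def bd_def)

lemma cb_PC: assumes C: "C \<in> components X d" and t: "\<tau> \<in> ocells X d"
  shows "cobd_top X d (PC C g) \<tau> = (if set (tl \<tau>) \<in> C then cobd_top X d g \<tau> else 0)"
proof -
  have "ct X (PC C g) i \<tau> = (if set (tl \<tau>) \<in> C then ct X g i \<tau> else 0)" if i: "i < Suc d" for i
    using face_comp[OF C t i] by (simp add: ct_def PC_def)
  hence "cobd_top X d (PC C g) \<tau> = (\<Sum>i<Suc d. if set (tl \<tau>) \<in> C then ct X g i \<tau> else 0)"
    unfolding cb_in[OF t] by (intro sum.cong) auto
  thus ?thesis using cb_in[OF t] by auto
qed

lemma uplap_PC: assumes C: "C \<in> components X d"
  shows "uplap X d (PC C g) = PC C (uplap X d g)"
proof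
  fix \<sigma>
  show "uplap X d (PC C g) \<sigma> = PC C (uplap X d g) \<sigma>"
  proof (cases "\<sigma> \<in> ocells X (d - 1)")
    case False then show ?thesis by (simp add: uplap_out PC_def)
  next
    case s: True
    have "uplap X d (PC C g) \<sigma> = (\<Sum>v\<in>up_verts X \<sigma>. if set \<sigma> \<in> C then cobd_top X d g (v # \<sigma>) else 0)"
      unfolding uplap_in[OF s] by (intro sum.cong refl) (simp add: cb_PC[OF C cons_ocells[OF s]])
    thus ?thesis using uplap_in[OF s] by (simp add: PC_def)
  qed
qed

lemma PC_forms: "f \<in> forms X k \<Longrightarrow> PC C f \<in> forms X k"
  by (auto simp: forms_def PC_def ocells_def)

lemma XC_sub: "comp_complex X d C \<subseteq> X"
  using X_sub by (auto simp: comp_complex_def cells_def)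

lemma ocellsXC_top: assumes C: "C \<in> components X d"
  shows "\<tau> \<in> ocells (comp_complex X d C) d \<longleftrightarrow> \<tau> \<in> ocells X d \<and> set (tl \<tau>) \<in> C"
proof
  assume t: "\<tau> \<in> ocells (comp_complex X d C) d"
  then obtain T c where T: "T \<in> cells X d" "c \<in> C" "c \<subseteq> T" "set \<tau> \<subseteq> T"
    by (auto simp: ocells_def comp_complex_def)
  have fT: "finite T" using T X_fin by (auto simp: cells_def)
  have "card (set \<tau>) = card T" using t T by (simp add: ocells_def cells_def distinct_card)
  hence eq: "set \<tau> = T" using card_subset_eq[OF fT T(4)] by simp
  hence to: "\<tau> \<in> ocells X d" using t T by (auto simp: ocells_def cells_def)
  have c1: "c \<in> cells X (d - 1)" using comp_cells[OF C] T(2) by auto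
  have tl1: "set (tl \<tau>) \<in> cells X (d - 1)" using ocell_cells[OF del_ocells'[OF to, of 0]] by simp
  have tlT: "set (tl \<tau>) \<subseteq> T" using del_at_subset[of 0 \<tau>] eq by simp
  have "(c, set (tl \<tau>)) \<in> RR" using same_top[OF c1 tl1 T(1) T(3) tlT] .
  thus "\<tau> \<in> ocells X d \<and> set (tl \<tau>) \<in> C" using to comp_closed[OF C T(2)] by simp
next
  assume a: "\<tau> \<in> ocells X d \<and> set (tl \<tau>) \<in> C"
  have "set \<tau> \<in> cells X d" using ocell_cells a by blast
  moreover have "set (tl \<tau>) \<subseteq> set \<tau>" using del_at_subset[of 0 \<tau>] by simp
  ultimately have "set \<tau> \<in> comp_complex X d C" using a unfolding comp_complex_def by blast
  thus "\<tau> \<in> ocells (comp_complex X d C) d" using a by (simp add: ocells_def)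
qed

lemma comp_card: "C \<in> components X d \<Longrightarrow> s \<in> C \<Longrightarrow> card s = d \<and> s \<in> X"
  using comp_cells dd by (fastforce simp: cells_def)

lemma ocellsXC_low: assumes C: "C \<in> components X d"
  shows "\<sigma> \<in> ocells (comp_complex X d C) (d - 1) \<longleftrightarrow> \<sigma> \<in> ocells X (d - 1) \<and> set \<sigma> \<in> C"
proof
  assume t: "\<sigma> \<in> ocells (comp_complex X d C) (d - 1)"
  then obtain T c where T: "T \<in> cells X d" "c \<in> C" "c \<subseteq> T" "set \<sigma> \<subseteq> T"
    by (auto simp: ocells_def comp_complex_def)
  have so: "\<sigma> \<in> ocells X (d - 1)" using t XC_sub by (auto simp: ocells_def)
  have c1: "c \<in> cells X (d - 1)" using comp_cells[OF C] T(2) by auto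
  have "(c, set \<sigma>) \<in> RR" using same_top[OF c1 ocell_cells[OF so] T(1) T(3) T(4)] .
  thus "\<sigma> \<in> ocells X (d - 1) \<and> set \<sigma> \<in> C" using so comp_closed[OF C T(2)] by simp
next
  assume a: "\<sigma> \<in> ocells X (d - 1) \<and> set \<sigma> \<in> C"
  hence "set \<sigma> \<in> X" by (simp add: ocells_def)
  then obtain T where T: "T \<in> cells X d" "set \<sigma> \<subseteq> T" using unif by (auto simp: uniform_def)
  hence "set \<sigma> \<in> comp_complex X d C" using a unfolding comp_complex_def by blast
  thus "\<sigma> \<in> ocells (comp_complex X d C) (d - 1)" using a by (simp add: ocells_def)
qed

lemma card_d_top: "\<tau> \<in> X \<Longrightarrow> s \<subseteq> \<tau> \<Longrightarrow> card s = d \<Longrightarrow> card \<tau> = card s + 1 \<Longrightarrow> \<tau> \<in> cells X d"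
  by (simp add: cells_def)

lemma deg_XC: assumes C: "C \<in> components X d" and s: "s \<in> C"
  shows "deg (comp_complex X d C) s = deg X s"
proof -
  have cs: "card s = d" using comp_card[OF C s] by simp
  have "{\<tau> \<in> comp_complex X d C. s \<subseteq> \<tau> \<and> card \<tau> = card s + 1} = {\<tau> \<in> X. s \<subseteq> \<tau> \<and> card \<tau> = card s + 1}"
  proof (safe)
    fix \<tau> assume "\<tau> \<in> comp_complex X d C" thus "\<tau> \<in> X" using XC_sub by auto
  next
    fix \<tau> assume t: "\<tau> \<in> X" "s \<subseteq> \<tau>" "card \<tau> = card s + 1"
    have "\<tau> \<in> cells X d" using card_d_top[OF t(1,2) cs t(3)] .
    thus "\<tau> \<in> comp_complex X d C" using t s unfolding comp_complex_def by blast
  qed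
  thus ?thesis by (simp add: deg_def)
qed

lemma up_XC: assumes C: "C \<in> components X d" and s: "set \<sigma> \<in> C"
  shows "up_verts (comp_complex X d C) \<sigma> = up_verts X \<sigma>"
proof -
  have cs: "card (set \<sigma>) = d" using comp_card[OF C s] by simp
  have fin: "finite (set \<sigma>)" by simp
  show ?thesis unfolding up_verts_def
  proof (safe)
    fix v assume "insert v (set \<sigma>) \<in> comp_complex X d C" thus "insert v (set \<sigma>) \<in> X" using XC_sub by auto
  next
    fix v assume v: "v \<notin> set \<sigma>" "insert v (set \<sigma>) \<in> X"
    have "insert v (set \<sigma>) \<in> cells X d" using card_d_top[OF v(2) subset_insertI cs] v(1) by simp
    thus "insert v (set \<sigma>) \<in> comp_complex X d C" using s unfolding comp_complex_def by blast
  qed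
qed

lemma cb_XC: assumes C: "C \<in> components X d" and t: "\<tau> \<in> ocells X d" and tc: "set (tl \<tau>) \<in> C"
  shows "cobd_top (comp_complex X d C) d h \<tau> = cobd_top X d h \<tau>"
proof -
  have t': "\<tau> \<in> ocells (comp_complex X d C) d" using ocellsXC_top[OF C] t tc by simp
  have "deg (comp_complex X d C) (set (del_at i \<tau>)) = deg X (set (del_at i \<tau>))" if i: "i < d + 1" for i
    using deg_XC[OF C] face_comp[OF C t, of i] i tc by simp
  thus ?thesis using t t' by (simp add: cobd_top_def)
qed

lemma uplap_XC: assumes C: "C \<in> components X d" and h: "PC C h = h"
  shows "uplap (comp_complex X d C) d h = uplap X d h"
proof
  fix \<sigma>
  show "uplap (comp_complex X d C) d h \<sigma> = uplap X d h \<sigma>"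
  proof (cases "\<sigma> \<in> ocells X (d - 1) \<and> set \<sigma> \<in> C")
    case True
    hence s': "\<sigma> \<in> ocells (comp_complex X d C) (d - 1)" using ocellsXC_low[OF C] by simp
    have "uplap (comp_complex X d C) d h \<sigma> = (\<Sum>v\<in>up_verts X \<sigma>. cobd_top (comp_complex X d C) d h (v # \<sigma>))"
      using s' up_XC[OF C] True by (simp add: uplap_def bd_def)
    also have "\<dots> = (\<Sum>v\<in>up_verts X \<sigma>. cobd_top X d h (v # \<sigma>))"
      using True by (intro sum.cong refl cb_XC[OF C]) (auto intro: cons_ocells)
    finally show ?thesis using uplap_in True by simp
  next
    case False
    hence "\<sigma> \<notin> ocells (comp_complex X d C) (d - 1)" using ocellsXC_low[OF C] by simp
    hence "uplap (comp_complex X d C) d h \<sigma> = 0" by (simp add: uplap_def bd_def)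
    moreover have "uplap X d h \<sigma> = 0"
    proof -
      have "uplap X d h \<sigma> = PC C (uplap X d h) \<sigma>" using uplap_PC[OF C, of h] h by simp
      thus ?thesis using False uplap_out by (auto simp: PC_def)
    qed
    ultimately show ?thesis by simp
  qed
qed

lemma forms_XC: assumes C: "C \<in> components X d"
  shows "forms (comp_complex X d C) (d - 1) = {f \<in> forms X (d - 1). PC C f = f}"
proof (safe)
  fix f assume f: "f \<in> forms (comp_complex X d C) (d - 1)"
  have z: "f xs = 0" if "\<not> (xs \<in> ocells X (d - 1) \<and> set xs \<in> C)" for xs
    using f that ocellsXC_low[OF C] by (simp add: forms_def)
  show "PC C f = f" unfolding PC_def fun_eq_iff using z by auto
  show "f \<in> forms X (d - 1)" unfolding forms_def
  proof (safe)
    fix xs assume "xs \<notin> ocells X (d - 1)" thus "f xs = 0" using z by blast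
  next
    fix xs i k assume xs: "xs \<in> ocells X (d - 1)" and ik: "i < length xs" "k < length xs" "i \<noteq> k"
    show "f (swap_at xs i k) = - f xs"
    proof (cases "set xs \<in> C")
      case True
      hence "xs \<in> ocells (comp_complex X d C) (d - 1)" using ocellsXC_low[OF C] xs by simp
      thus ?thesis using f ik by (simp add: forms_def)
    next
      case False
      thus ?thesis using z[of xs] z[of "swap_at xs i k"] ik by simp
    qed
  qed
next
  fix f assume f: "f \<in> forms X (d - 1)" and p: "PC C f = f"
  show "f \<in> forms (comp_complex X d C) (d - 1)" unfolding forms_def
  proof (safe)
    fix xs assume "xs \<notin> ocells (comp_complex X d C) (d - 1)"
    hence "xs \<notin> ocells X (d - 1) \<or> set xs \<notin> C" using ocellsXC_low[OF C] by simp
    thus "f xs = 0"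
    proof
      assume "xs \<notin> ocells X (d - 1)" thus ?thesis using f by (simp add: forms_def)
    next
      assume "set xs \<notin> C" thus ?thesis using p by (metis PC_def)
    qed
  next
    fix xs i k assume xs: "xs \<in> ocells (comp_complex X d C) (d - 1)" and ik: "i < length xs" "k < length xs" "i \<noteq> k"
    hence "xs \<in> ocells X (d - 1)" using ocellsXC_low[OF C] by simp
    thus "f (swap_at xs i k) = - f xs" using f ik by (simp add: forms_def)
  qed
qed

lemma EC_char: assumes C: "C \<in> components X d"
  shows "eigenspace_up (comp_complex X d C) d lam = {f \<in> eigenspace_up X d lam. PC C f = f}"
  using forms_XC[OF C] uplap_XC[OF C] by (auto simp: eigenspace_up_def)

lemma PC_E: assumes C: "C \<in> components X d" and f: "f \<in> eigenspace_up X d lam"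
  shows "PC C f \<in> eigenspace_up X d lam"
proof -
  have "uplap X d (PC C f) = PC C (\<lambda>x. lam * f x)" using uplap_PC[OF C] f by (simp add: eigenspace_up_def)
  also have "\<dots> = (\<lambda>x. lam * PC C f x)" by (simp add: PC_def fun_eq_iff)
  finally show ?thesis using f PC_forms by (simp add: eigenspace_up_def)
qed

lemma PC_idem: "PC C (PC C f) = PC C f" by (simp add: PC_def fun_eq_iff)

lemma PC_other: assumes "C \<in> components X d" "C' \<in> components X d" "C \<noteq> C'" "PC C' f = f"
  shows "PC C f = (\<lambda>_. 0)"
proof
  fix xs show "PC C f xs = 0"
  proof (cases "set xs \<in> C")
    case True
    hence "set xs \<notin> C'" using comp_unique assms by blast
    hence "f xs = 0" using assms(4) by (metis PC_def)
    thus ?thesis by (simp add: PC_def)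
  qed (simp add: PC_def)
qed

lemma decomp: assumes f: "f \<in> forms X (d - 1)"
  shows "f = (\<Sum>C\<in>components X d. PC C f)"
proof
  fix xs
  show "f xs = (\<Sum>C\<in>components X d. PC C f) xs"
  proof (cases "xs \<in> ocells X (d - 1)")
    case False
    hence fx: "f xs = 0" using f by (simp add: forms_def)
    have "(\<Sum>C\<in>components X d. PC C f) xs = 0" unfolding sum_fun_app PC_def using fx by (intro sum.neutral) auto
    thus ?thesis using fx by simp
  next
    case True
    obtain C0 where C0: "C0 \<in> components X d" "set xs \<in> C0" using comp_exists ocell_cells[OF True] by blast
    have "(\<Sum>C\<in>components X d. PC C f) xs = (\<Sum>C\<in>components X d. if C = C0 then f xs else 0)"
      unfolding sum_fun_app using C0 comp_unique by (intro sum.cong refl) (auto simp: PC_def)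
    also have "\<dots> = f xs" using C0 finite_comps by simp
    finally show ?thesis by simp
  qed
qed

end

context setting begin

lemma E_span: "eigenspace_up X d lam \<subseteq> fs.span ((\<lambda>xs. (\<lambda>y. if y = xs then 1 else 0)) ` ocells X (d - 1))"
proof
  fix f assume f: "f \<in> eigenspace_up X d lam"
  hence ff: "f \<in> forms X (d - 1)" by (simp add: eigenspace_up_def)
  have "f = (\<Sum>xs\<in>ocells X (d - 1). (\<lambda>y. f xs * (if y = xs then 1 else 0)))"
  proof
    fix y
    show "f y = (\<Sum>xs\<in>ocells X (d - 1). (\<lambda>y. f xs * (if y = xs then 1 else 0))) y"
    proof -
      have "(\<Sum>a\<in>ocells X (d - 1). f a * (if y = a then 1 else 0)) = (\<Sum>a\<in>ocells X (d - 1). if y = a then f y else 0)"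
        by (rule sum.cong) auto
      also have "\<dots> = (if y \<in> ocells X (d - 1) then f y else 0)" using finite_ocells by (simp add: sum.delta)
      also have "\<dots> = f y" using ff by (simp add: forms_def)
      finally show ?thesis unfolding sum_fun_app by simp
    qed
  qed
  also have "\<dots> \<in> fs.span ((\<lambda>xs. (\<lambda>y. if y = xs then 1 else 0)) ` ocells X (d - 1))"
    by (intro fs.span_sum fs.span_scale fs.span_base) auto
  finally show "f \<in> fs.span ((\<lambda>xs. (\<lambda>y. if y = xs then 1 else 0)) ` ocells X (d - 1))" .
qed

lemma indep_finite: "fs.independent B \<Longrightarrow> B \<subseteq> eigenspace_up X d lam \<Longrightarrow> finite B"
  using fs.independent_span_bound[OF finite_imageI[OF finite_ocells] _ order.trans[OF _ E_span]] by blast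

lemma part1: "mult_up X d lam = (\<Sum>C\<in>components X d. mult_up (comp_complex X d C) d lam)"
proof -
  let ?E = "eigenspace_up X d lam"
  let ?EC = "\<lambda>C. eigenspace_up (comp_complex X d C) d lam"
  define BB where "BB C = (SOME B. B \<subseteq> ?EC C \<and> fs.independent B \<and> ?EC C \<subseteq> fs.span B \<and> card B = fs.dim (?EC C))" for C
  have BB: "BB C \<subseteq> ?EC C \<and> fs.independent (BB C) \<and> ?EC C \<subseteq> fs.span (BB C) \<and> card (BB C) = fs.dim (?EC C)" for C
  proof -
    obtain B where "B \<subseteq> ?EC C" "fs.independent B" "?EC C \<subseteq> fs.span B" "card B = fs.dim (?EC C)"
      by (rule fs.basis_exists)
    hence "\<exists>B. B \<subseteq> ?EC C \<and> fs.independent B \<and> ?EC C \<subseteq> fs.span B \<and> card B = fs.dim (?EC C)" by blast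
    thus ?thesis unfolding BB_def by (rule someI_ex)
  qed
  have BBE: "C \<in> components X d \<Longrightarrow> b \<in> BB C \<Longrightarrow> b \<in> ?E \<and> PC C b = b" for C b
    using BB[of C] EC_char by blast
  have BBfin: "C \<in> components X d \<Longrightarrow> finite (BB C)" for C
    using indep_finite BB BBE by blast
  have PCB: "PC C0 v = (if v \<in> BB C0 then v else 0)"
    if C: "C \<in> components X d" "C0 \<in> components X d" and v: "v \<in> BB C" for C C0 v
  proof (cases "v \<in> BB C0")
    case True then show ?thesis using BBE[OF C(2)] by simp
  next
    case False
    hence "C \<noteq> C0" using v by auto
    hence "PC C0 v = (\<lambda>_. 0)" using PC_other[OF C(2) C(1)] BBE[OF C(1) v] by auto
    thus ?thesis using False by (simp add: zero_fun_def)
  qed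
  have disj: "BB C \<inter> BB C' = {}" if "C \<in> components X d" "C' \<in> components X d" "C \<noteq> C'" for C C'
  proof (rule ccontr)
    assume "BB C \<inter> BB C' \<noteq> {}"
    then obtain b where b: "b \<in> BB C" "b \<in> BB C'" by auto
    have "PC C b = (\<lambda>_. 0)" using PC_other[OF that(1,2,3)] BBE[OF that(2) b(2)] by blast
    hence "b = 0" using BBE[OF that(1) b(1)] by (simp add: zero_fun_def)
    thus False using fs.dependent_zero[of "BB C"] BB[of C] b by simp
  qed
  define B where "B = (\<Union>C\<in>components X d. BB C)"
  have Bsub: "B \<subseteq> ?E" using BBE by (auto simp: B_def)
  have card: "card B = (\<Sum>C\<in>components X d. card (BB C))"
    unfolding B_def by (rule card_UN_disjoint) (use finite_comps BBfin disj in auto)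
  have span: "?E \<subseteq> fs.span B"
  proof
    fix f assume f: "f \<in> ?E"
    hence ff: "f \<in> forms X (d - 1)" by (simp add: eigenspace_up_def)
    have "(\<Sum>C\<in>components X d. PC C f) \<in> fs.span B"
    proof (rule fs.span_sum)
      fix C assume C: "C \<in> components X d"
      have "PC C f \<in> ?EC C" using EC_char[OF C] PC_E[OF C f] PC_idem by simp
      hence "PC C f \<in> fs.span (BB C)" using BB by blast
      moreover have "fs.span (BB C) \<subseteq> fs.span B" using C by (intro fs.span_mono) (auto simp: B_def)
      ultimately show "PC C f \<in> fs.span B" by blast
    qed
    thus "f \<in> fs.span B" using decomp[OF ff] by simp
  qed
  have indep: "fs.independent B"
  proof
    assume "fs.dependent B"
    then obtain t u v0 where t: "finite t" "t \<subseteq> B" "(\<Sum>v\<in>t. (\<lambda>x. u v * v x)) = 0" "v0 \<in> t" "u v0 \<noteq> 0"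
      unfolding fs.dependent_explicit by blast
    obtain C0 where C0: "C0 \<in> components X d" "v0 \<in> BB C0" using t B_def by blast
    have tC: "\<forall>v\<in>t. \<exists>C\<in>components X d. v \<in> BB C" using t by (auto simp: B_def)
    let ?t0 = "t \<inter> BB C0"
    have "(\<Sum>v\<in>?t0. (\<lambda>x. u v * v x)) = 0"
    proof
      fix x
      have "(\<Sum>v\<in>t. u v * PC C0 v x) = (\<Sum>v\<in>t. if v \<in> BB C0 then u v * v x else 0)"
      proof (rule sum.cong[OF refl])
        fix v assume "v \<in> t"
        then obtain C where "C \<in> components X d" "v \<in> BB C" using tC by blast
        thus "u v * PC C0 v x = (if v \<in> BB C0 then u v * v x else 0)" using PCB[OF _ C0(1)] by simp
      qed
      also have "\<dots> = (\<Sum>v\<in>?t0. u v * v x)" using t(1) by (simp add: sum.inter_restrict)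
      finally have e1: "(\<Sum>v\<in>t. u v * PC C0 v x) = (\<Sum>v\<in>?t0. u v * v x)" .
      have "(\<Sum>v\<in>t. u v * PC C0 v x) = (if set x \<in> C0 then (\<Sum>v\<in>t. u v * v x) else 0)"
        by (simp add: PC_def)
      also have "(\<Sum>v\<in>t. u v * v x) = 0" using fun_cong[OF t(3), of x] by (simp add: sum_fun_app)
      finally show "(\<Sum>v\<in>?t0. (\<lambda>x. u v * v x)) x = 0 x" using e1 by (simp add: sum_fun_app)
    qed
    hence "u v0 = 0"
      using fs.independentD[of "BB C0" ?t0 u v0] BB[of C0] t C0 by auto
    thus False using t by simp
  qed
  have "fs.dim ?E = (\<Sum>C\<in>components X d. card (BB C))"
    using fs.dim_unique[OF Bsub span indep card] .
  thus ?thesis using BB by (simp add: mult_up_fs)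
qed

end

theorem mainTheorem1:
  fixes X :: "'a set set" and d :: nat
  assumes "d \<ge> 2" and "finite X" and "is_dcomplex X d" and "uniform X d"
  shows "(\<forall>lam. mult_up X d lam = (\<Sum>C\<in>components X d. mult_up (comp_complex X d C) d lam))
    \<and> (\<forall>lam. eigenvalue_up X d lam \<longrightarrow> 0 \<le> lam \<and> lam \<le> real d + 1)
    \<and> {f\<in>forms X (d - 1). uplap X d f = (\<lambda>_. 0)} = {f\<in>forms X (d - 1). cobd_top X d f = (\<lambda>_. 0)}
    \<and> (dconnected X d \<longrightarrow>
        ((eigenvalue_up X d (real d + 1) \<longleftrightarrow> disorientable X d)
         \<and> (\<forall>S. disorientation X d S \<longrightarrow>
              uplap X d (bd X d (disF X d S)) = (\<lambda>x. (real d + 1) * bd X d (disF X d S) x)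
              \<and> bd X d (disF X d S) \<noteq> (\<lambda>_. 0))))"
proof -
  interpret setting X d using assms by unfold_locales
  have p2: "\<forall>lam. eigenvalue_up X d lam \<longrightarrow> 0 \<le> lam \<and> lam \<le> real d + 1"
    using part2 by (auto simp: eigenvalue_up_def eigenspace_up_def)
  have p4: "dconnected X d \<longrightarrow> (eigenvalue_up X d (real d + 1) \<longleftrightarrow> disorientable X d)"
  proof (intro impI iffI)
    assume conn: "dconnected X d" and "eigenvalue_up X d (real d + 1)"
    then obtain f where f: "f \<in> forms X (d - 1)" "f \<noteq> (\<lambda>_. 0)" "uplap X d f = (\<lambda>x. (real d + 1) * f x)"
      by (auto simp: eigenvalue_up_def eigenspace_up_def)
    show "disorientable X d" using disor[OF f conn] by (auto simp: disorientable_def)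
  next
    assume "disorientable X d"
    then obtain S where S: "disorientation X d S" by (auto simp: disorientable_def)
    show "eigenvalue_up X d (real d + 1)"
      using part4a[OF S] bd_forms[OF disF_forms[OF S]] by (auto simp: eigenvalue_up_def eigenspace_up_def)
  qed
  show ?thesis using part1 p2 part3 p4 part4a by blast
qed

end
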